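(* Let $G$ be a group with subgroups $H,J$ such that $H\ne G$, $|J:H\cap J|=2$ and $|H:H\cap J|$ finite. Let $g\in J\setminus(H\cap J)$, $K=H\cap H^g$, $k=|H:K|$, $\lambda=|K:H\cap J|$, $L=\langle K,g\rangle$, and $\Gamma=\mathrm{Cos}(G,H,J)$. Then: (a) $\Gamma$ is a locally finite regular graph of valency $k$ and constant edge-multiplicity $\lambda$, and $\Gamma$ is connected if and only if $G=\langle H,J\rangle$; (b) the right multiplication action of $G$ on $V\cup E$ induces an arc-transitive group of automorphisms of $\Gamma$ isomorphic to $G/\mathrm{Core}_G(H\cap J)$, and the stabilisers in $G$ of the vertex $H$, the edge $J$ and the arc $(H,J,Hg)$ are $H$, $J$ and $K\cap J=H\cap J$ respectively; (c) $H\cap L=K$, $|L:K|=2$, $|L:J|=\lambda$, and $\mathrm{Cos}(G,H,L)$ is a locally finite simple graph isomorphic to $\mathrm{SimpCos}(G,H,HgH)$; (d) $\mathrm{Cos}(G,H,L)$ is isomorphic to the base graph of $\Gamma$, $\Gamma$ is a $(G,\lambda)$-extender of it, and $\Gamma$ is simple if and only if $L=J$.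
   Context: Graphs are triples $(V,E,\mathbf I)$, $\mathbf I\subseteq V\times E$, each edge incident with exactly two distinct vertices (multiple edges allowed). A graph is regular of valency $k$ with edge-multiplicity $\lambda$ if every vertex is adjacent to exactly $k$ vertices and every pair of adjacent vertices shares exactly $\lambda$ edges. The base graph is the simple graph on the same vertices with edges the pairs of adjacent vertices. The $\mu$-extender $\Gamma^{(\mu)}$ of a graph $\Gamma$ replaces each edge by $\mu$ edges with the same two end vertices; $\Gamma'$ is a $(G,\mu)$-extender of $\Gamma$ if $\Gamma'\cong\Gamma^{(\mu)}$ and both $\Gamma$ and $\Gamma'$ are $G$-arc-transitive. $\mathrm{Core}_G(X)=\bigcap_{g\in G}X^g$. $\mathrm{Cos}(G,H,J)$: vertices $\{Hx\}$, edges $\{Jy\}$, $Hx$ incident with $Jy$ iff $yx^{-1}\in JH$; $G$ acts by right multiplication. $\mathrm{SimpCos}(G,H,HgH)$: simple graph on $\{Hx\}$ with $\{Hx,Hy\}$ an edge iff $yx^{-1}\in HgH$. *)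

theory Defs
  imports "HOL-Algebra.Coset" "HOL-Algebra.Bij" "HOL-Algebra.Generated_Groups"
begin

section \<open>Graphs as triples (V, E, I) with I \<subseteq> V \<times> E (multiple edges allowed)\<close>

definition ends :: "('v \<times> 'e) set \<Rightarrow> 'e \<Rightarrow> 'v set" where
  "ends I e = {v. (v, e) \<in> I}"

definition is_graph :: "'v set \<Rightarrow> 'e set \<Rightarrow> ('v \<times> 'e) set \<Rightarrow> bool" where
  "is_graph V E I \<longleftrightarrow> I \<subseteq> V \<times> E \<and> (\<forall>e\<in>E. card (ends I e) = 2)"

definition adjacent :: "'v set \<Rightarrow> 'e set \<Rightarrow> ('v \<times> 'e) set \<Rightarrow> 'v \<Rightarrow> 'v \<Rightarrow> bool" where
  "adjacent V E I u v \<longleftrightarrow> u \<in> V \<and> v \<in> V \<and> u \<noteq> v \<and> (\<exists>e\<in>E. (u, e) \<in> I \<and> (v, e) \<in> I)"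

definition neighbours :: "'v set \<Rightarrow> 'e set \<Rightarrow> ('v \<times> 'e) set \<Rightarrow> 'v \<Rightarrow> 'v set" where
  "neighbours V E I u = {v. adjacent V E I u v}"

definition shared_edges :: "'e set \<Rightarrow> ('v \<times> 'e) set \<Rightarrow> 'v \<Rightarrow> 'v \<Rightarrow> 'e set" where
  "shared_edges E I u v = {e\<in>E. (u, e) \<in> I \<and> (v, e) \<in> I}"

definition locally_finite :: "'v set \<Rightarrow> 'e set \<Rightarrow> ('v \<times> 'e) set \<Rightarrow> bool" where
  "locally_finite V E I \<longleftrightarrow> (\<forall>v\<in>V. finite {e\<in>E. (v, e) \<in> I})"

definition regular_graph :: "'v set \<Rightarrow> 'e set \<Rightarrow> ('v \<times> 'e) set \<Rightarrow> nat \<Rightarrow> nat \<Rightarrow> bool" where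
  "regular_graph V E I k lam \<longleftrightarrow>
     (\<forall>v\<in>V. finite (neighbours V E I v) \<and> card (neighbours V E I v) = k) \<and>
     (\<forall>u v. adjacent V E I u v \<longrightarrow> finite (shared_edges E I u v) \<and> card (shared_edges E I u v) = lam)"

definition connected_graph :: "'v set \<Rightarrow> 'e set \<Rightarrow> ('v \<times> 'e) set \<Rightarrow> bool" where
  "connected_graph V E I \<longleftrightarrow>
     (\<forall>u\<in>V. \<forall>v\<in>V. (u, v) \<in> {(x, y). adjacent V E I x y}\<^sup>*)"

definition simple_graph :: "'v set \<Rightarrow> 'e set \<Rightarrow> ('v \<times> 'e) set \<Rightarrow> bool" where
  "simple_graph V E I \<longleftrightarrow> is_graph V E I \<and>
     (\<forall>e\<in>E. \<forall>e'\<in>E. ends I e = ends I e' \<longrightarrow> e = e')"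

definition graph_iso ::
  "'v set \<Rightarrow> 'e set \<Rightarrow> ('v \<times> 'e) set \<Rightarrow> 'w set \<Rightarrow> 'f set \<Rightarrow> ('w \<times> 'f) set \<Rightarrow> bool" where
  "graph_iso V E I V' E' I' \<longleftrightarrow>
     (\<exists>\<phi> \<psi>. bij_betw \<phi> V V' \<and> bij_betw \<psi> E E' \<and>
        (\<forall>v\<in>V. \<forall>e\<in>E. (v, e) \<in> I \<longleftrightarrow> (\<phi> v, \<psi> e) \<in> I'))"

text \<open>Base graph: simple graph on V whose edges are the pairs of adjacent vertices
  (an edge is the 2-set of its ends; incidence is membership).\<close>
definition base_E :: "'v set \<Rightarrow> 'e set \<Rightarrow> ('v \<times> 'e) set \<Rightarrow> 'v set set" where
  "base_E V E I = {{u, v} | u v. adjacent V E I u v}"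

definition base_I :: "'v set \<Rightarrow> 'e set \<Rightarrow> ('v \<times> 'e) set \<Rightarrow> ('v \<times> 'v set) set" where
  "base_I V E I = {(w, e). e \<in> base_E V E I \<and> w \<in> e}"

text \<open>mu-extender: every edge replaced by mu parallel copies (e, i), i < mu.\<close>
definition ext_E :: "'e set \<Rightarrow> nat \<Rightarrow> ('e \<times> nat) set" where
  "ext_E E mu = E \<times> {..<mu}"

definition ext_I :: "('v \<times> 'e) set \<Rightarrow> nat \<Rightarrow> ('v \<times> ('e \<times> nat)) set" where
  "ext_I I mu = {(v, (e, i)). (v, e) \<in> I \<and> i < mu}"

definition conj_set :: "('a, 'b) monoid_scheme \<Rightarrow> 'a set \<Rightarrow> 'a \<Rightarrow> 'a set" where
  "conj_set G X g = (m_inv G g) <#\<^bsub>G\<^esub> (X #>\<^bsub>G\<^esub> g)"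

definition core :: "('a, 'b) monoid_scheme \<Rightarrow> 'a set \<Rightarrow> 'a set" where
  "core G X = (\<Inter>g\<in>carrier G. conj_set G X g)"

text \<open>Index |A : B| of B in A (as a cardinal number; 0 if infinite).\<close>
definition idx :: "('a, 'b) monoid_scheme \<Rightarrow> 'a set \<Rightarrow> 'a set \<Rightarrow> nat" where
  "idx G A B = card (rcosets\<^bsub>G\<lparr>carrier := A\<rparr>\<^esub> B)"

definition Cos_V :: "('a, 'b) monoid_scheme \<Rightarrow> 'a set \<Rightarrow> 'a set set" where
  "Cos_V G H = rcosets\<^bsub>G\<^esub> H"

definition Cos_E :: "('a, 'b) monoid_scheme \<Rightarrow> 'a set \<Rightarrow> 'a set set" where
  "Cos_E G J = rcosets\<^bsub>G\<^esub> J"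

definition Cos_I :: "('a, 'b) monoid_scheme \<Rightarrow> 'a set \<Rightarrow> 'a set \<Rightarrow> ('a set \<times> 'a set) set" where
  "Cos_I G H J = {(A, B). \<exists>x\<in>carrier G. \<exists>y\<in>carrier G.
      A = (H #>\<^bsub>G\<^esub> x) \<and> B = (J #>\<^bsub>G\<^esub> y) \<and> y \<otimes>\<^bsub>G\<^esub> m_inv G x \<in> J <#>\<^bsub>G\<^esub> H}"

definition SimpCos_E :: "('a, 'b) monoid_scheme \<Rightarrow> 'a set \<Rightarrow> 'a \<Rightarrow> 'a set set set" where
  "SimpCos_E G H g = {{(H #>\<^bsub>G\<^esub> x), (H #>\<^bsub>G\<^esub> y)} | x y.
      x \<in> carrier G \<and> y \<in> carrier G \<and>
      y \<otimes>\<^bsub>G\<^esub> m_inv G x \<in> (H <#>\<^bsub>G\<^esub> {g}) <#>\<^bsub>G\<^esub> H}"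

definition SimpCos_I :: "('a, 'b) monoid_scheme \<Rightarrow> 'a set \<Rightarrow> 'a \<Rightarrow> ('a set \<times> 'a set set) set" where
  "SimpCos_I G H g = {(w, e). e \<in> SimpCos_E G H g \<and> w \<in> e}"

definition arcs :: "('v \<times> 'e) set \<Rightarrow> ('v \<times> 'e \<times> 'v) set" where
  "arcs I = {(u, e, v). (u, e) \<in> I \<and> (v, e) \<in> I \<and> u \<noteq> v}"

text \<open>A set S of permutations of V \<union> E (V, E sets of sets, both acted on by the same maps)
  is an arc-transitive group of automorphisms: each map is an automorphism, and S is
  transitive on arcs.\<close>
definition graph_aut :: "'v set \<Rightarrow> 'v set \<Rightarrow> ('v \<times> 'v) set \<Rightarrow> ('v \<Rightarrow> 'v) \<Rightarrow> bool" where
  "graph_aut V E I f \<longleftrightarrow> bij_betw f V V \<and> bij_betw f E E \<and>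
     (\<forall>v\<in>V. \<forall>e\<in>E. (v, e) \<in> I \<longleftrightarrow> (f v, f e) \<in> I)"

definition arc_transitive_on :: "'v set \<Rightarrow> 'v set \<Rightarrow> ('v \<times> 'v) set \<Rightarrow> ('v \<Rightarrow> 'v) set \<Rightarrow> bool" where
  "arc_transitive_on V E I S \<longleftrightarrow> (\<forall>f\<in>S. graph_aut V E I f) \<and>
     (\<forall>a\<in>arcs I. \<forall>b\<in>arcs I. \<exists>f\<in>S. (case a of (u, e, v) \<Rightarrow> (f u, f e, f v)) = b)"

definition rmult_perm :: "('a, 'b) monoid_scheme \<Rightarrow> 'a set set \<Rightarrow> 'a \<Rightarrow> ('a set \<Rightarrow> 'a set)" where
  "rmult_perm G S g = restrict (\<lambda>A. (A #>\<^bsub>G\<^esub> g)) S"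

definition G_arc_transitive :: "('a, 'b) monoid_scheme \<Rightarrow> 'a set set \<Rightarrow> 'a set set \<Rightarrow> ('a set \<times> 'a set) set \<Rightarrow> bool" where
  "G_arc_transitive G V E I \<longleftrightarrow> arc_transitive_on V E I (rmult_perm G (V \<union> E) ` carrier G)"

definition G_extender :: "('a, 'b) monoid_scheme \<Rightarrow> nat \<Rightarrow>
    'a set set \<Rightarrow> 'a set set \<Rightarrow> ('a set \<times> 'a set) set \<Rightarrow>
    'a set set \<Rightarrow> 'a set set \<Rightarrow> ('a set \<times> 'a set) set \<Rightarrow> bool" where
  "G_extender G mu V' E' I' V E I \<longleftrightarrow>
     graph_iso V' E' I' V (ext_E E mu) (ext_I I mu) \<and>
     G_arc_transitive G V E I \<and> G_arc_transitive G V' E' I'"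

end

theory Submission
  imports Defs
begin


lemma (in group) cancel_l1 [simp]: "x \<in> carrier G \<Longrightarrow> y \<in> carrier G \<Longrightarrow> inv x \<otimes> (x \<otimes> y) = y"
  by (simp add: m_assoc[symmetric])
lemma (in group) cancel_l2 [simp]: "x \<in> carrier G \<Longrightarrow> y \<in> carrier G \<Longrightarrow> x \<otimes> (inv x \<otimes> y) = y"
  by (simp add: m_assoc[symmetric])

lemma (in group) rcos_eq_iff:
  assumes "subgroup S G" "x \<in> carrier G" "y \<in> carrier G"
  shows "(S #> x = S #> y) \<longleftrightarrow> x \<otimes> inv y \<in> S"
proof
  assume "S #> x = S #> y"
  then have "x \<in> S #> y" using rcos_self[OF assms(2,1)] by simp
  then show "x \<otimes> inv y \<in> S" using subgroup.rcos_module_imp[OF assms(1) is_group assms(3)] by blast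
next
  assume "x \<otimes> inv y \<in> S"
  then have "x \<in> S #> y" using subgroup.rcos_module_rev[OF assms(1) is_group assms(3,2)] by blast
  then show "S #> x = S #> y" using repr_independence[OF _ assms(3,1)] by simp
qed

lemma (in group) rcos_mem_iff:
  assumes "subgroup S G" "x \<in> carrier G" "z \<in> carrier G"
  shows "z \<in> S #> x \<longleftrightarrow> z \<otimes> inv x \<in> S"
  using subgroup.rcos_module[OF assms(1) is_group assms(2,3)] .

lemma img_bij_rel:
  assumes "\<forall>a\<in>S. \<forall>b\<in>S. f a = f b \<longleftrightarrow> \<phi> a = \<phi> b"
  shows "bij_betw (\<lambda>B. f (SOME a. a \<in> S \<and> \<phi> a = B)) (\<phi> ` S) (f ` S)"
proof -
  have sm: "\<And>a. a \<in> S \<Longrightarrow> (SOME c. c \<in> S \<and> \<phi> c = \<phi> a) \<in> S \<and> \<phi> (SOME c. c \<in> S \<and> \<phi> c = \<phi> a) = \<phi> a"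
    by (rule someI_ex) blast
  show ?thesis unfolding bij_betw_def inj_on_def
  proof (intro conjI ballI impI)
    fix B C assume "B \<in> \<phi> ` S" "C \<in> \<phi> ` S"
      and e: "f (SOME a. a \<in> S \<and> \<phi> a = B) = f (SOME a. a \<in> S \<and> \<phi> a = C)"
    then obtain b c where "b \<in> S" "B = \<phi> b" "c \<in> S" "C = \<phi> c" by blast
    then show "B = C" using sm[of b] sm[of c] e assms by metis
  next
    show "(\<lambda>B. f (SOME a. a \<in> S \<and> \<phi> a = B)) ` \<phi> ` S = f ` S"
    proof
      show "(\<lambda>B. f (SOME a. a \<in> S \<and> \<phi> a = B)) ` \<phi> ` S \<subseteq> f ` S" using sm by auto
      show "f ` S \<subseteq> (\<lambda>B. f (SOME a. a \<in> S \<and> \<phi> a = B)) ` \<phi> ` S"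
      proof
        fix y assume "y \<in> f ` S"
        then obtain a where a: "a \<in> S" "y = f a" by blast
        then have "y = f (SOME c. c \<in> S \<and> \<phi> c = \<phi> a)" using sm[of a] assms by metis
        then show "y \<in> (\<lambda>B. f (SOME a. a \<in> S \<and> \<phi> a = B)) ` \<phi> ` S" using a by blast
      qed
    qed
  qed
qed

lemma img_card_rel:
  assumes "\<forall>a\<in>S. \<forall>b\<in>S. f a = f b \<longleftrightarrow> \<phi> a = \<phi> b"
  shows "card (f ` S) = card (\<phi> ` S)" "finite (f ` S) \<longleftrightarrow> finite (\<phi> ` S)"
  using img_bij_rel[OF assms] bij_betw_same_card bij_betw_finite by metis+

lemma img_finite_coarser:
  assumes "\<forall>a\<in>S. \<forall>b\<in>S. \<phi> a = \<phi> b \<longrightarrow> f a = f b" and "finite (\<phi> ` S)"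
  shows "finite (f ` S)"
proof -
  have "f ` S = (\<lambda>B. f (SOME a. a \<in> S \<and> \<phi> a = B)) ` (\<phi> ` S)"
  proof
    have sm: "\<And>a. a \<in> S \<Longrightarrow> (SOME c. c \<in> S \<and> \<phi> c = \<phi> a) \<in> S \<and> \<phi> (SOME c. c \<in> S \<and> \<phi> c = \<phi> a) = \<phi> a"
      by (rule someI_ex) blast
    show "f ` S \<subseteq> (\<lambda>B. f (SOME a. a \<in> S \<and> \<phi> a = B)) ` (\<phi> ` S)"
    proof
      fix y assume "y \<in> f ` S"
      then obtain a where a: "a \<in> S" "y = f a" by blast
      then have "y = f (SOME c. c \<in> S \<and> \<phi> c = \<phi> a)" using sm[of a] assms(1) by metis
      then show "y \<in> (\<lambda>B. f (SOME a. a \<in> S \<and> \<phi> a = B)) ` \<phi> ` S" using a by blast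
    qed
    show "(\<lambda>B. f (SOME a. a \<in> S \<and> \<phi> a = B)) ` (\<phi> ` S) \<subseteq> f ` S" using sm by auto
  qed
  then show ?thesis using assms(2) by simp
qed

lemma rcosets_sub: "rcosets\<^bsub>G\<lparr>carrier := A\<rparr>\<^esub> B = (\<lambda>a. B #>\<^bsub>G\<^esub> a) ` A"
  by (auto simp: RCOSETS_def r_coset_def)

locale cg = group G for G (structure) +
  fixes H J g K L
  assumes sH: "subgroup H G" and sJ: "subgroup J G"
    and gJ: "g \<in> J" and gH: "g \<notin> H"
    and splitJ: "\<And>j. j \<in> J \<Longrightarrow> j \<in> H \<or> j \<otimes> inv g \<in> H"
    and K_def: "K = H \<inter> conj_set G H g"
    and L_def: "L = generate G (K \<union> {g})"
begin

lemma Hc: "h \<in> H \<Longrightarrow> h \<in> carrier G" using subgroup.mem_carrier[OF sH] .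
lemma Jc: "h \<in> J \<Longrightarrow> h \<in> carrier G" using subgroup.mem_carrier[OF sJ] .
lemma gc[simp]: "g \<in> carrier G" using Jc gJ by blast
lemma Hm: "a \<in> H \<Longrightarrow> b \<in> H \<Longrightarrow> a \<otimes> b \<in> H" using subgroup.m_closed[OF sH] .
lemma Hi: "a \<in> H \<Longrightarrow> inv a \<in> H" using subgroup.m_inv_closed[OF sH] .
lemma Jm: "a \<in> J \<Longrightarrow> b \<in> J \<Longrightarrow> a \<otimes> b \<in> J" using subgroup.m_closed[OF sJ] .
lemma Ji: "a \<in> J \<Longrightarrow> inv a \<in> J" using subgroup.m_inv_closed[OF sJ] .
lemma H1: "\<one> \<in> H" using subgroup.one_closed[OF sH] .
lemma J1: "\<one> \<in> J" using subgroup.one_closed[OF sJ] .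
lemma Hsub: "H \<subseteq> carrier G" using subgroup.subset[OF sH] .
lemma Jsub: "J \<subseteq> carrier G" using subgroup.subset[OF sJ] .

lemma Hinv_iff: "a \<in> carrier G \<Longrightarrow> inv a \<in> H \<longleftrightarrow> a \<in> H"
  using Hi[of a] Hi[of "inv a"] by auto

lemma gg: "g \<otimes> g \<in> H"
proof -
  have "g \<otimes> g \<in> J" using Jm gJ by blast
  from splitJ[OF this] show ?thesis
  proof
    assume "g \<otimes> g \<otimes> inv g \<in> H"
    then have "g \<in> H" by (simp add: m_assoc)
    with gH show ?thesis by blast
  qed
qed

lemma gigi: "inv g \<otimes> inv g \<in> H"
  using Hi[OF gg] by (simp add: inv_mult_group)

lemma gig: "inv g \<notin> H" using gH Hinv_iff by simp

lemma conj_HJ: "h \<in> H \<Longrightarrow> h \<in> J \<Longrightarrow> g \<otimes> h \<otimes> inv g \<in> H"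
proof -
  assume h: "h \<in> H" "h \<in> J"
  have "g \<otimes> h \<otimes> inv g \<in> J" using gJ h Jm Ji by blast
  from splitJ[OF this] show ?thesis
  proof
    assume a: "g \<otimes> h \<otimes> inv g \<otimes> inv g \<in> H"
    have "g = (g \<otimes> h \<otimes> inv g \<otimes> inv g) \<otimes> (g \<otimes> g) \<otimes> inv h"
      using h Hc by (simp add: m_assoc)
    moreover have "(g \<otimes> h \<otimes> inv g \<otimes> inv g) \<otimes> (g \<otimes> g) \<otimes> inv h \<in> H"
      using Hm[OF Hm[OF a gg] Hi[OF h(1)]] .
    ultimately have "g \<in> H" by simp
    with gH show ?thesis by blast
  qed
qed

lemma conj_mem: "z \<in> conj_set G H g \<longleftrightarrow> z \<in> carrier G \<and> g \<otimes> z \<otimes> inv g \<in> H"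
proof
  assume "z \<in> conj_set G H g"
  then obtain h where h: "h \<in> H" "z = inv g \<otimes> (h \<otimes> g)"
    unfolding conj_set_def l_coset_def r_coset_def by blast
  then show "z \<in> carrier G \<and> g \<otimes> z \<otimes> inv g \<in> H" using Hc by (simp add: m_assoc)
next
  assume a: "z \<in> carrier G \<and> g \<otimes> z \<otimes> inv g \<in> H"
  have "z = inv g \<otimes> ((g \<otimes> z \<otimes> inv g) \<otimes> g)" using a by (simp add: m_assoc)
  then show "z \<in> conj_set G H g" using a
    unfolding conj_set_def l_coset_def r_coset_def by blast
qed

lemma K_mem: "z \<in> K \<longleftrightarrow> z \<in> H \<and> g \<otimes> z \<otimes> inv g \<in> H"
  using conj_mem Hc unfolding K_def by blast

lemma HJ_K: "H \<inter> J \<subseteq> K" using K_mem conj_HJ by blast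
lemma Kc: "z \<in> K \<Longrightarrow> z \<in> carrier G" using K_mem Hc by blast

lemma sK: "subgroup K G"
proof (rule subgroupI)
  show "K \<subseteq> carrier G" using Kc by blast
  show "K \<noteq> {}" using HJ_K H1 J1 by blast
  fix a b assume a: "a \<in> K" and b: "b \<in> K"
  have "g \<otimes> inv a \<otimes> inv g = inv (g \<otimes> a \<otimes> inv g)" using a Kc by (simp add: inv_mult_group m_assoc)
  then show "inv a \<in> K" using a K_mem Hi by auto
  have "g \<otimes> (a \<otimes> b) \<otimes> inv g = (g \<otimes> a \<otimes> inv g) \<otimes> (g \<otimes> b \<otimes> inv g)"
    using a b Kc by (simp add: m_assoc)
  then show "a \<otimes> b \<in> K" using a b K_mem Hm by metis
qed

lemma Km: "a \<in> K \<Longrightarrow> b \<in> K \<Longrightarrow> a \<otimes> b \<in> K" using subgroup.m_closed[OF sK] .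
lemma Ki: "a \<in> K \<Longrightarrow> inv a \<in> K" using subgroup.m_inv_closed[OF sK] .

lemma ggK: "g \<otimes> g \<in> K"
proof -
  have "g \<otimes> (g \<otimes> g) \<otimes> inv g = g \<otimes> g" by (simp add: m_assoc)
  then show ?thesis using gg K_mem by simp
qed
lemma gigiK: "inv g \<otimes> inv g \<in> K" using Ki[OF ggK] by (simp add: inv_mult_group)

lemma conjK1: "z \<in> K \<Longrightarrow> g \<otimes> z \<otimes> inv g \<in> K"
proof -
  assume z: "z \<in> K"
  have a: "g \<otimes> z \<otimes> inv g \<in> H" "z \<in> H" using z K_mem by auto
  have "g \<otimes> (g \<otimes> z \<otimes> inv g) \<otimes> inv g = (g \<otimes> g) \<otimes> z \<otimes> (inv g \<otimes> inv g)"
    using z Kc by (simp add: m_assoc)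
  also have "\<dots> \<in> H" using a gg gigi Hm by blast
  finally show ?thesis using a K_mem by blast
qed

lemma conjK2: "z \<in> K \<Longrightarrow> inv g \<otimes> z \<otimes> g \<in> K"
proof -
  assume z: "z \<in> K"
  have "inv g \<otimes> z \<otimes> g = (inv g \<otimes> inv g) \<otimes> (g \<otimes> z \<otimes> inv g) \<otimes> (g \<otimes> g)"
    using z Kc by (simp add: m_assoc)
  moreover have "g \<otimes> z \<otimes> inv g \<in> K" using conjK1 z .
  ultimately show ?thesis using Km[OF Km[OF gigiK], OF _ ggK] by simp
qed

lemma L_mem: "l \<in> L \<longleftrightarrow> l \<in> carrier G \<and> (l \<in> K \<or> l \<otimes> inv g \<in> K)"
proof -
  define M where "M = {l \<in> carrier G. l \<in> K \<or> l \<otimes> inv g \<in> K}"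
  have sM: "subgroup M G"
  proof (rule subgroupI)
    show "M \<subseteq> carrier G" unfolding M_def by blast
    show "M \<noteq> {}" using subgroup.one_closed[OF sK] unfolding M_def by blast
    fix a b assume a: "a \<in> M" and b: "b \<in> M"
    have ac: "a \<in> carrier G" and bc: "b \<in> carrier G" using a b unfolding M_def by auto
    show "inv a \<in> M"
    proof (cases "a \<in> K")
      case True then show ?thesis using Ki ac unfolding M_def by auto
    next
      case False
      then have c: "a \<otimes> inv g \<in> K" using a unfolding M_def by auto
      have "inv a \<otimes> inv g = (inv g \<otimes> inv (a \<otimes> inv g) \<otimes> g) \<otimes> (inv g \<otimes> inv g)"
        using ac by (simp add: inv_mult_group m_assoc)
      also have "\<dots> \<in> K" using Km[OF conjK2[OF Ki[OF c]] gigiK] .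
      finally show ?thesis using ac unfolding M_def by auto
    qed
    show "a \<otimes> b \<in> M"
    proof (cases "a \<in> K")
      case aK: True
      show ?thesis
      proof (cases "b \<in> K")
        case True then show ?thesis using Km aK ac bc unfolding M_def by auto
      next
        case False
        then have c: "b \<otimes> inv g \<in> K" using b unfolding M_def by auto
        have "a \<otimes> b \<otimes> inv g = a \<otimes> (b \<otimes> inv g)" using ac bc by (simp add: m_assoc)
        then show ?thesis using Km[OF aK c] ac bc unfolding M_def by auto
      qed
    next
      case False
      then have ca: "a \<otimes> inv g \<in> K" using a unfolding M_def by auto
      show ?thesis
      proof (cases "b \<in> K")
        case True
        have "a \<otimes> b \<otimes> inv g = (a \<otimes> inv g) \<otimes> (g \<otimes> b \<otimes> inv g)" using ac bc by (simp add: m_assoc)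
        then show ?thesis using Km[OF ca conjK1[OF True]] ac bc unfolding M_def by auto
      next
        case False
        then have c: "b \<otimes> inv g \<in> K" using b unfolding M_def by auto
        have "a \<otimes> b = (a \<otimes> inv g) \<otimes> (g \<otimes> (b \<otimes> inv g) \<otimes> inv g) \<otimes> (g \<otimes> g)"
          using ac bc by (simp add: m_assoc)
        then show ?thesis using Km[OF Km[OF ca conjK1[OF c]] ggK] ac bc unfolding M_def by auto
      qed
    qed
  qed
  have "K \<union> {g} \<subseteq> M" using Kc subgroup.one_closed[OF sK] unfolding M_def by auto
  then have "L \<subseteq> M" unfolding L_def using generate_subgroup_incl[OF _ sM] by blast
  moreover have "M \<subseteq> L"
  proof
    fix l assume "l \<in> M"
    then have lc: "l \<in> carrier G" and d: "l \<in> K \<or> l \<otimes> inv g \<in> K" unfolding M_def by auto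
    show "l \<in> L"
    proof (cases "l \<in> K")
      case True then show ?thesis unfolding L_def by (simp add: generate.incl)
    next
      case False
      then have c: "l \<otimes> inv g \<in> K" using d by blast
      have "(l \<otimes> inv g) \<otimes> g \<in> L" unfolding L_def
        by (rule generate.eng) (use c in \<open>auto intro: generate.incl\<close>)
      then show ?thesis using lc by (simp add: m_assoc)
    qed
  qed
  ultimately show ?thesis unfolding M_def by blast
qed

lemma sL: "subgroup L G"
proof -
  have "K \<union> {g} \<subseteq> carrier G" using Kc by auto
  then show ?thesis unfolding L_def by (rule generate_is_subgroup)
qed
lemma gL: "g \<in> L" using L_mem subgroup.one_closed[OF sK] by simp
lemma KL: "K \<subseteq> L" using L_mem Kc by blast
lemma splitL: "l \<in> L \<Longrightarrow> l \<in> H \<or> l \<otimes> inv g \<in> H" using L_mem K_mem by blast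
lemma HL: "H \<inter> L = K"
proof
  show "K \<subseteq> H \<inter> L" using KL K_mem by blast
  show "H \<inter> L \<subseteq> K"
  proof
    fix l assume l: "l \<in> H \<inter> L"
    show "l \<in> K"
    proof (rule ccontr)
      assume "l \<notin> K"
      then have "l \<otimes> inv g \<in> H" using l L_mem K_mem by blast
      then have "inv l \<otimes> (l \<otimes> inv g) \<in> H" using l Hm Hi by blast
      then have "inv g \<in> H" using l Hc by (simp add: m_assoc[symmetric])
      then show False using gig by blast
    qed
  qed
qed
lemma JL: "J \<subseteq> L"
proof
  fix j assume j: "j \<in> J"
  show "j \<in> L"
  proof (cases "j \<in> H")
    case True then show ?thesis using j HJ_K KL by blast
  next
    case False
    then have "j \<otimes> inv g \<in> H \<inter> J" using splitJ[OF j] j gJ Jm Ji by blast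
    then show ?thesis using HJ_K L_mem Jc j by blast
  qed
qed

end

lemma (in group) set_mult_mem: "z \<in> A <#> B \<longleftrightarrow> (\<exists>a\<in>A. \<exists>b\<in>B. z = a \<otimes> b)"
  unfolding set_mult_def by blast

locale cgX = cg +
  fixes X
  assumes sX: "subgroup X G" and gX: "g \<in> X"
    and splitX: "\<And>x. x \<in> X \<Longrightarrow> x \<in> H \<or> x \<otimes> inv g \<in> H"
    and HJX: "H \<inter> J \<subseteq> X"
begin

lemma Xc: "h \<in> X \<Longrightarrow> h \<in> carrier G" using subgroup.mem_carrier[OF sX] .
lemma Xm: "a \<in> X \<Longrightarrow> b \<in> X \<Longrightarrow> a \<otimes> b \<in> X" using subgroup.m_closed[OF sX] .
lemma Xi: "a \<in> X \<Longrightarrow> inv a \<in> X" using subgroup.m_inv_closed[OF sX] .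

lemma P_iff:
  assumes x: "x \<in> carrier G" and y: "y \<in> carrier G"
  shows "y \<otimes> inv x \<in> X <#> H \<longleftrightarrow> (H #> x = H #> y \<or> H #> x = H #> (g \<otimes> y))"
proof -
  have e1: "H #> x = H #> y \<longleftrightarrow> x \<otimes> inv y \<in> H" using rcos_eq_iff[OF sH x y] .
  have e2: "H #> x = H #> (g \<otimes> y) \<longleftrightarrow> x \<otimes> inv y \<otimes> inv g \<in> H"
    using rcos_eq_iff[OF sH x m_closed[OF gc y]] x y by (simp add: inv_mult_group m_assoc)
  have "y \<otimes> inv x \<in> X <#> H \<longleftrightarrow> (x \<otimes> inv y \<in> H \<or> x \<otimes> inv y \<otimes> inv g \<in> H)"
  proof
    assume "y \<otimes> inv x \<in> X <#> H"
    then obtain a b where ab: "a \<in> X" "b \<in> H" "y \<otimes> inv x = a \<otimes> b" using set_mult_mem by blast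
    have "x \<otimes> inv y = inv (y \<otimes> inv x)" using x y by (simp add: inv_mult_group)
    also have "\<dots> = inv b \<otimes> inv a" using ab Xc[OF ab(1)] Hc[OF ab(2)] by (simp add: inv_mult_group)
    finally have xy: "x \<otimes> inv y = inv b \<otimes> inv a" .
    from splitX[OF Xi[OF ab(1)]] show "x \<otimes> inv y \<in> H \<or> x \<otimes> inv y \<otimes> inv g \<in> H"
    proof
      assume "inv a \<in> H" then show ?thesis using xy Hm Hi ab by auto
    next
      assume c: "inv a \<otimes> inv g \<in> H"
      have "x \<otimes> inv y \<otimes> inv g = inv b \<otimes> (inv a \<otimes> inv g)" using xy ab Xc Hc by (simp add: m_assoc)
      then show ?thesis using Hm[OF Hi[OF ab(2)] c] by simp
    qed
  next
    assume "x \<otimes> inv y \<in> H \<or> x \<otimes> inv y \<otimes> inv g \<in> H"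
    then show "y \<otimes> inv x \<in> X <#> H"
    proof
      assume h: "x \<otimes> inv y \<in> H"
      have "y \<otimes> inv x = \<one> \<otimes> inv (x \<otimes> inv y)" using x y by (simp add: inv_mult_group)
      then show ?thesis using set_mult_mem subgroup.one_closed[OF sX] Hi[OF h] by blast
    next
      assume h: "x \<otimes> inv y \<otimes> inv g \<in> H"
      have "y \<otimes> inv x = inv g \<otimes> inv (x \<otimes> inv y \<otimes> inv g)" using x y by (simp add: inv_mult_group m_assoc)
      then show ?thesis using set_mult_mem Xi[OF gX] Hi[OF h] by blast
    qed
  qed
  then show ?thesis using e1 e2 by simp
qed

lemma P_inv:
  assumes x: "x \<in> carrier G" and y: "y \<in> carrier G" and x': "x' \<in> carrier G" and y': "y' \<in> carrier G"
    and hx: "H #> x = H #> x'" and hy: "X #> y = X #> y'" and P: "y \<otimes> inv x \<in> X <#> H"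
  shows "y' \<otimes> inv x' \<in> X <#> H"
proof -
  have a: "x \<otimes> inv x' \<in> H" using rcos_eq_iff[OF sH x x'] hx by simp
  have b: "y' \<otimes> inv y \<in> X" using rcos_eq_iff[OF sX y' y] hy by simp
  obtain c d where cd: "c \<in> X" "d \<in> H" "y \<otimes> inv x = c \<otimes> d" using P set_mult_mem by blast
  have "y' \<otimes> inv x' = (y' \<otimes> inv y) \<otimes> (y \<otimes> inv x) \<otimes> (x \<otimes> inv x')"
    using x y x' y' by (simp add: m_assoc)
  also have "\<dots> = ((y' \<otimes> inv y) \<otimes> c) \<otimes> (d \<otimes> (x \<otimes> inv x'))"
    using cd x y x' y' Xc Hc by (simp add: m_assoc)
  finally show ?thesis using set_mult_mem Xm[OF b cd(1)] Hm[OF cd(2) a] by blast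
qed

lemma INC:
  assumes x: "x \<in> carrier G" and y: "y \<in> carrier G"
  shows "(H #> x, X #> y) \<in> Cos_I G H X \<longleftrightarrow> (H #> x = H #> y \<or> H #> x = H #> (g \<otimes> y))"
proof
  assume "(H #> x, X #> y) \<in> Cos_I G H X"
  then obtain x' y' where c: "x' \<in> carrier G" "y' \<in> carrier G" "H #> x = H #> x'" "X #> y = X #> y'"
    "y' \<otimes> inv x' \<in> X <#> H" unfolding Cos_I_def by auto
  have "y \<otimes> inv x \<in> X <#> H" using P_inv[OF c(1,2) x y] c by simp
  then show "H #> x = H #> y \<or> H #> x = H #> (g \<otimes> y)" using P_iff[OF x y] by simp
next
  assume "H #> x = H #> y \<or> H #> x = H #> (g \<otimes> y)"
  then have "y \<otimes> inv x \<in> X <#> H" using P_iff[OF x y] by simp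
  then show "(H #> x, X #> y) \<in> Cos_I G H X" unfolding Cos_I_def using x y by blast
qed

lemma Vmem: "A \<in> Cos_V G H \<longleftrightarrow> (\<exists>x\<in>carrier G. A = H #> x)"
  unfolding Cos_V_def RCOSETS_def by blast
lemma Emem: "B \<in> Cos_E G X \<longleftrightarrow> (\<exists>y\<in>carrier G. B = X #> y)"
  unfolding Cos_E_def RCOSETS_def by blast

lemma I_sub: "(A, B) \<in> Cos_I G H X \<Longrightarrow> A \<in> Cos_V G H \<and> B \<in> Cos_E G X"
  unfolding Cos_I_def Vmem Emem by blast

lemma Hy_ne: "y \<in> carrier G \<Longrightarrow> H #> y \<noteq> H #> (g \<otimes> y)"
proof
  assume y: "y \<in> carrier G" and "H #> y = H #> (g \<otimes> y)"
  then have "y \<otimes> inv (g \<otimes> y) \<in> H" using rcos_eq_iff[OF sH y m_closed[OF gc y]] by simp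
  then show False using y gig by (simp add: inv_mult_group m_assoc)
qed

lemma ends_eq: "y \<in> carrier G \<Longrightarrow> ends (Cos_I G H X) (X #> y) = {H #> y, H #> (g \<otimes> y)}"
proof
  assume y: "y \<in> carrier G"
  show "ends (Cos_I G H X) (X #> y) \<subseteq> {H #> y, H #> (g \<otimes> y)}"
  proof
    fix v assume "v \<in> ends (Cos_I G H X) (X #> y)"
    then have v: "(v, X #> y) \<in> Cos_I G H X" unfolding ends_def by simp
    then obtain x where x: "x \<in> carrier G" "v = H #> x" using I_sub Vmem by blast
    then show "v \<in> {H #> y, H #> (g \<otimes> y)}" using INC[OF x(1) y] v by simp
  qed
  have "(H #> y, X #> y) \<in> Cos_I G H X" using INC[OF y y] by simp
  moreover have "(H #> (g \<otimes> y), X #> y) \<in> Cos_I G H X" using INC[OF m_closed[OF gc y] y] by simp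
  ultimately show "{H #> y, H #> (g \<otimes> y)} \<subseteq> ends (Cos_I G H X) (X #> y)"
    unfolding ends_def by simp
qed

lemma is_graph: "is_graph (Cos_V G H) (Cos_E G X) (Cos_I G H X)"
  unfolding is_graph_def
proof
  show "Cos_I G H X \<subseteq> Cos_V G H \<times> Cos_E G X" using I_sub by auto
  show "\<forall>e\<in>Cos_E G X. card (ends (Cos_I G H X) e) = 2"
  proof
    fix e assume "e \<in> Cos_E G X"
    then obtain y where y: "y \<in> carrier G" "e = X #> y" unfolding Emem by blast
    have "card {H #> y, H #> (g \<otimes> y)} = 2" using Hy_ne[OF y(1)] by simp
    then show "card (ends (Cos_I G H X) e) = 2" using ends_eq[OF y(1)] y(2) by simp
  qed
qed

lemma inc_iff_ends: "(v, e) \<in> Cos_I G H X \<longleftrightarrow> v \<in> ends (Cos_I G H X) e"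
  unfolding ends_def by simp

lemma adj_iff: "adjacent (Cos_V G H) (Cos_E G X) (Cos_I G H X) u v \<longleftrightarrow>
   u \<noteq> v \<and> (\<exists>y\<in>carrier G. {u, v} = {H #> y, H #> (g \<otimes> y)})"
proof
  assume "adjacent (Cos_V G H) (Cos_E G X) (Cos_I G H X) u v"
  then obtain e where u: "u \<noteq> v" "e \<in> Cos_E G X" "(u, e) \<in> Cos_I G H X" "(v, e) \<in> Cos_I G H X"
    unfolding adjacent_def by blast
  then obtain y where y: "y \<in> carrier G" "e = X #> y" unfolding Emem by blast
  have "u \<in> ends (Cos_I G H X) e" "v \<in> ends (Cos_I G H X) e" using u(3,4) unfolding ends_def by simp_all
  then have "u \<in> {H #> y, H #> (g \<otimes> y)}" "v \<in> {H #> y, H #> (g \<otimes> y)}"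
    unfolding y(2) ends_eq[OF y(1)] by simp_all
  then have "{u, v} = {H #> y, H #> (g \<otimes> y)}" using u(1) by blast
  then show "u \<noteq> v \<and> (\<exists>y\<in>carrier G. {u, v} = {H #> y, H #> (g \<otimes> y)})" using u(1) y(1) by blast
next
  assume "u \<noteq> v \<and> (\<exists>y\<in>carrier G. {u, v} = {H #> y, H #> (g \<otimes> y)})"
  then obtain y where y: "u \<noteq> v" "y \<in> carrier G" "{u, v} = {H #> y, H #> (g \<otimes> y)}" by blast
  have e: "X #> y \<in> Cos_E G X" unfolding Emem using y(2) by blast
  have "u \<in> ends (Cos_I G H X) (X #> y)" "v \<in> ends (Cos_I G H X) (X #> y)"
    unfolding ends_eq[OF y(2)] using y(3) by blast+
  then have "(u, X #> y) \<in> Cos_I G H X" "(v, X #> y) \<in> Cos_I G H X" unfolding ends_def by simp_all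
  moreover then have "u \<in> Cos_V G H" "v \<in> Cos_V G H" using I_sub by blast+
  ultimately show "adjacent (Cos_V G H) (Cos_E G X) (Cos_I G H X) u v"
    unfolding adjacent_def using e y(1) by blast
qed

lemma adj_char:
  assumes x: "x \<in> carrier G"
  shows "adjacent (Cos_V G H) (Cos_E G X) (Cos_I G H X) (H #> x) v \<longleftrightarrow> (\<exists>h\<in>H. v = H #> (g \<otimes> h \<otimes> x))"
proof
  assume "adjacent (Cos_V G H) (Cos_E G X) (Cos_I G H X) (H #> x) v"
  from adj_iff[THEN iffD1, OF this] obtain y where y: "H #> x \<noteq> v" "y \<in> carrier G" "{H #> x, v} = {H #> y, H #> (g \<otimes> y)}"
    by blast
  have gy: "g \<otimes> y \<in> carrier G" using y by simp
  from y(3) have "(H #> x = H #> y \<and> v = H #> (g \<otimes> y)) \<or> (H #> x = H #> (g \<otimes> y) \<and> v = H #> y)"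
    by (simp add: doubleton_eq_iff)
  then show "\<exists>h\<in>H. v = H #> (g \<otimes> h \<otimes> x)"
  proof
    assume "H #> x = H #> y \<and> v = H #> (g \<otimes> y)"
    then have v: "v = H #> (g \<otimes> y)" and hx: "H #> x = H #> y" by auto
    have h: "y \<otimes> inv x \<in> H" using hx rcos_eq_iff[OF sH y(2) x] by simp
    have "g \<otimes> (y \<otimes> inv x) \<otimes> x = g \<otimes> y" using x y by (simp add: m_assoc)
    then have "v = H #> (g \<otimes> (y \<otimes> inv x) \<otimes> x)" using v by simp
    then show ?thesis using h by blast
  next
    assume "H #> x = H #> (g \<otimes> y) \<and> v = H #> y"
    then have v: "v = H #> y" and hx: "H #> x = H #> (g \<otimes> y)" by auto
    have h: "g \<otimes> y \<otimes> inv x \<in> H" using hx rcos_eq_iff[OF sH gy x] by simp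
    have e: "g \<otimes> ((inv g \<otimes> inv g) \<otimes> (g \<otimes> y \<otimes> inv x)) \<otimes> x = y" using x y by (simp add: m_assoc)
    have hh: "(inv g \<otimes> inv g) \<otimes> (g \<otimes> y \<otimes> inv x) \<in> H" using Hm[OF gigi h] .
    have "v = H #> (g \<otimes> ((inv g \<otimes> inv g) \<otimes> (g \<otimes> y \<otimes> inv x)) \<otimes> x)" using v e by simp
    then show ?thesis using hh by blast
  qed
next
  assume "\<exists>h\<in>H. v = H #> (g \<otimes> h \<otimes> x)"
  then obtain h where h: "h \<in> H" "v = H #> (g \<otimes> h \<otimes> x)" by blast
  have hx: "h \<otimes> x \<in> carrier G" using h Hc x by simp
  have "x \<otimes> inv (h \<otimes> x) = inv h" using h x Hc by (simp add: inv_mult_group m_assoc)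
  then have e1: "H #> x = H #> (h \<otimes> x)" using rcos_eq_iff[OF sH x hx] Hi[OF h(1)] by simp
  have v: "v = H #> (g \<otimes> (h \<otimes> x))" using h x Hc by (simp add: m_assoc)
  have "H #> x \<noteq> v" using Hy_ne[OF hx] e1 v by simp
  moreover have "{H #> x, v} = {H #> (h \<otimes> x), H #> (g \<otimes> (h \<otimes> x))}" using e1 v by simp
  ultimately have "H #> x \<noteq> v \<and> (\<exists>y\<in>carrier G. {H #> x, v} = {H #> y, H #> (g \<otimes> y)})"
    using hx by (intro conjI bexI[of _ "h \<otimes> x"])
  then show "adjacent (Cos_V G H) (Cos_E G X) (Cos_I G H X) (H #> x) v"
    by (rule adj_iff[THEN iffD2])
qed

lemma neighbours_eq:
  assumes x: "x \<in> carrier G"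
  shows "neighbours (Cos_V G H) (Cos_E G X) (Cos_I G H X) (H #> x) = (\<lambda>h. H #> (g \<otimes> h \<otimes> x)) ` H"
proof (rule Set.set_eqI)
  fix v show "v \<in> neighbours (Cos_V G H) (Cos_E G X) (Cos_I G H X) (H #> x) \<longleftrightarrow> v \<in> (\<lambda>h. H #> (g \<otimes> h \<otimes> x)) ` H"
    by (simp only: neighbours_def mem_Collect_eq adj_char[OF x] image_iff)
qed

lemma edges_at:
  assumes x: "x \<in> carrier G"
  shows "{e \<in> Cos_E G X. (H #> x, e) \<in> Cos_I G H X} \<subseteq> (\<lambda>h. X #> (h \<otimes> x)) ` H"
proof
  fix e assume "e \<in> {e \<in> Cos_E G X. (H #> x, e) \<in> Cos_I G H X}"
  then have e1: "e \<in> Cos_E G X" and e2: "(H #> x, e) \<in> Cos_I G H X" by simp_all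
  from e1 obtain y where y: "y \<in> carrier G" "e = X #> y" unfolding Emem by blast
  have "(H #> x, X #> y) \<in> Cos_I G H X" using e2 y(2) by simp
  then have "H #> x = H #> y \<or> H #> x = H #> (g \<otimes> y)" using INC[OF x y(1)] by simp
  then show "e \<in> (\<lambda>h. X #> (h \<otimes> x)) ` H"
  proof
    assume "H #> x = H #> y"
    then have h: "y \<otimes> inv x \<in> H" using rcos_eq_iff[OF sH y(1) x] by simp
    have eq: "e = X #> ((y \<otimes> inv x) \<otimes> x)" using x y by (simp add: m_assoc)
    show ?thesis by (rule image_eqI[of e "\<lambda>h. X #> (h \<otimes> x)" "y \<otimes> inv x"]) (simp_all only: eq h)
  next
    assume a: "H #> x = H #> (g \<otimes> y)"
    have gy: "g \<otimes> y \<in> carrier G" using y by simp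
    have h: "g \<otimes> y \<otimes> inv x \<in> H" using rcos_eq_iff[OF sH gy x] a by simp
    have e1: "(g \<otimes> y \<otimes> inv x) \<otimes> x = g \<otimes> y" using x y by (simp add: m_assoc)
    have e2: "y \<otimes> inv (g \<otimes> y) = inv g" using y by (simp add: inv_mult_group m_assoc)
    have "X #> y = X #> (g \<otimes> y)"
      using rcos_eq_iff[OF sX y(1) gy] Xi[OF gX] e2 by simp
    then have eq: "e = X #> ((g \<otimes> y \<otimes> inv x) \<otimes> x)" using e1 y(2) by simp
    show ?thesis by (rule image_eqI[of e "\<lambda>h. X #> (h \<otimes> x)" "g \<otimes> y \<otimes> inv x"]) (simp_all only: eq h)
  qed
qed

end



lemma (in group) rcos_mult_cancel:
  assumes "subgroup S G" "x \<in> carrier G" "y \<in> carrier G" "a \<in> carrier G"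
  shows "S #> (x \<otimes> a) = S #> (y \<otimes> a) \<longleftrightarrow> S #> x = S #> y"
proof -
  have "(x \<otimes> a) \<otimes> inv (y \<otimes> a) = x \<otimes> inv y" using assms by (simp add: inv_mult_group m_assoc)
  then show ?thesis using rcos_eq_iff[OF assms(1)] assms by simp
qed

lemma (in group) rcos_ma:
  assumes "S \<subseteq> carrier G" "x \<in> carrier G" "a \<in> carrier G"
  shows "(S #> x) #> a = S #> (x \<otimes> a)"
  using coset_mult_assoc assms by simp

lemma (in cg) cg_self: "cg G H J g K L" by (rule cg_axioms)

sublocale cg \<subseteq> GJ: cgX G H J g K L J
  by (intro cgX.intro cgX_axioms.intro cg_self sJ gJ splitJ) auto

sublocale cg \<subseteq> GL: cgX G H J g K L L
  by (intro cgX.intro cgX_axioms.intro cg_self sL gL splitL) (use JL in auto)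

context cgX
begin

abbreviation "VV \<equiv> Cos_V G H"
abbreviation "EE \<equiv> Cos_E G X"
abbreviation "II \<equiv> Cos_I G H X"

lemma VV_act: "A \<in> VV \<Longrightarrow> a \<in> carrier G \<Longrightarrow> A #> a \<in> VV"
proof -
  assume A: "A \<in> VV" and a: "a \<in> carrier G"
  then obtain x where x: "x \<in> carrier G" "A = H #> x" unfolding Vmem by blast
  have "A #> a = H #> (x \<otimes> a)" using x rcos_ma[OF Hsub x(1) a] by simp
  then show ?thesis unfolding Vmem using x a by (intro bexI[of _ "x \<otimes> a"]) simp_all
qed

lemma EE_act: "A \<in> EE \<Longrightarrow> a \<in> carrier G \<Longrightarrow> A #> a \<in> EE"
proof -
  assume A: "A \<in> EE" and a: "a \<in> carrier G"
  then obtain x where x: "x \<in> carrier G" "A = X #> x" unfolding Emem by blast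
  have "A #> a = X #> (x \<otimes> a)" using x rcos_ma[OF subgroup.subset[OF sX] x(1) a] by simp
  then show ?thesis unfolding Emem using x a by (intro bexI[of _ "x \<otimes> a"]) simp_all
qed

lemma S_sub: "A \<in> VV \<union> EE \<Longrightarrow> A \<subseteq> carrier G"
proof -
  assume "A \<in> VV \<union> EE"
  then show ?thesis
  proof
    assume "A \<in> VV" then obtain x where "x \<in> carrier G" "A = H #> x" unfolding Vmem by blast
    then show ?thesis using r_coset_subset_G[OF Hsub] by simp
  next
    assume "A \<in> EE" then obtain x where "x \<in> carrier G" "A = X #> x" unfolding Emem by blast
    then show ?thesis using r_coset_subset_G[OF subgroup.subset[OF sX]] by simp
  qed
qed

lemma act_inv1: "A \<in> VV \<union> EE \<Longrightarrow> a \<in> carrier G \<Longrightarrow> (A #> a) #> inv a = A"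
  using S_sub coset_mult_assoc by simp
lemma act_inv2: "A \<in> VV \<union> EE \<Longrightarrow> a \<in> carrier G \<Longrightarrow> (A #> inv a) #> a = A"
  using S_sub coset_mult_assoc by simp
lemma S_act: "A \<in> VV \<union> EE \<Longrightarrow> a \<in> carrier G \<Longrightarrow> A #> a \<in> VV \<union> EE"
  using VV_act EE_act by blast

lemma INC_act:
  assumes v: "v \<in> VV" and e: "e \<in> EE" and a: "a \<in> carrier G"
  shows "(v #> a, e #> a) \<in> II \<longleftrightarrow> (v, e) \<in> II"
proof -
  obtain x where x: "x \<in> carrier G" "v = H #> x" using v Vmem by blast
  obtain y where y: "y \<in> carrier G" "e = X #> y" using e Emem by blast
  have 1: "(H #> x) #> a = H #> (x \<otimes> a)" "(X #> y) #> a = X #> (y \<otimes> a)"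
    using rcos_ma[OF Hsub x(1) a] rcos_ma[OF subgroup.subset[OF sX] y(1) a] by simp_all
  have 2: "g \<otimes> (y \<otimes> a) = (g \<otimes> y) \<otimes> a" using y a by (simp add: m_assoc)
  have 3: "H #> (x \<otimes> a) = H #> (y \<otimes> a) \<longleftrightarrow> H #> x = H #> y" using rcos_mult_cancel[OF sH x(1) y(1) a] .
  have 4: "H #> (x \<otimes> a) = H #> ((g \<otimes> y) \<otimes> a) \<longleftrightarrow> H #> x = H #> (g \<otimes> y)"
    using rcos_mult_cancel[OF sH x(1) _ a, of "g \<otimes> y"] y by simp
  show ?thesis unfolding x(2) y(2) 1 INC[OF m_closed[OF x(1) a] m_closed[OF y(1) a]] INC[OF x(1) y(1)] 2 3 4 ..
qed

lemma rm_aut: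
  assumes a: "a \<in> carrier G"
  shows "graph_aut VV EE II (rmult_perm G (VV \<union> EE) a)"
proof -
  let ?f = "rmult_perm G (VV \<union> EE) a"
  have f: "\<And>A. A \<in> VV \<union> EE \<Longrightarrow> ?f A = A #> a" unfolding rmult_perm_def by simp
  have ia: "inv a \<in> carrier G" using a by simp
  have bV: "bij_betw (\<lambda>A. A #> a) VV VV"
  proof (rule bij_betw_byWitness[where f' = "\<lambda>A. A #> inv a"])
    show "\<forall>A\<in>VV. A #> a #> inv a = A" using act_inv1 a by blast
    show "\<forall>A\<in>VV. A #> inv a #> a = A" using act_inv2 a by blast
    show "(\<lambda>A. A #> a) ` VV \<subseteq> VV" using VV_act a by blast
    show "(\<lambda>A. A #> inv a) ` VV \<subseteq> VV" using VV_act ia by blast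
  qed
  have bE: "bij_betw (\<lambda>A. A #> a) EE EE"
  proof (rule bij_betw_byWitness[where f' = "\<lambda>A. A #> inv a"])
    show "\<forall>A\<in>EE. A #> a #> inv a = A" using act_inv1 a by blast
    show "\<forall>A\<in>EE. A #> inv a #> a = A" using act_inv2 a by blast
    show "(\<lambda>A. A #> a) ` EE \<subseteq> EE" using EE_act a by blast
    show "(\<lambda>A. A #> inv a) ` EE \<subseteq> EE" using EE_act ia by blast
  qed
  show ?thesis unfolding graph_aut_def
  proof (intro conjI)
    show "bij_betw ?f VV VV" using bV by (rule bij_betw_cong[THEN iffD1, rotated]) (simp add: f)
    show "bij_betw ?f EE EE" using bE by (rule bij_betw_cong[THEN iffD1, rotated]) (simp add: f)
    show "\<forall>v\<in>VV. \<forall>e\<in>EE. ((v, e) \<in> II) = ((?f v, ?f e) \<in> II)"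
    proof (intro ballI)
      fix v e assume v: "v \<in> VV" and e: "e \<in> EE"
      then have "?f v = v #> a" "?f e = e #> a" using f by auto
      then show "((v, e) \<in> II) = ((?f v, ?f e) \<in> II)" using INC_act[OF v e a] by simp
    qed
  qed
qed

lemma arc_base:
  assumes "(u, e, v) \<in> arcs II"
  shows "\<exists>t\<in>carrier G. u = H #> t \<and> e = X #> t \<and> v = (H #> g) #> t"
proof -
  have u: "(u, e) \<in> II" "(v, e) \<in> II" "u \<noteq> v" using assms unfolding arcs_def by auto
  then obtain y where y: "y \<in> carrier G" "e = X #> y" using I_sub Emem by blast
  then have uv: "u \<in> {H #> y, H #> (g \<otimes> y)}" "v \<in> {H #> y, H #> (g \<otimes> y)}"
    using u ends_eq inc_iff_ends by auto
  show ?thesis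
  proof (cases "u = H #> y")
    case True
    then have "v = H #> (g \<otimes> y)" using uv u by auto
    then show ?thesis using True y rcos_ma[OF Hsub gc y(1)] by blast
  next
    case False
    then have uu: "u = H #> (g \<otimes> y)" and vv: "v = H #> y" using uv u by auto
    have gy: "g \<otimes> y \<in> carrier G" using y by simp
    have b1: "(g \<otimes> y) \<otimes> inv y = g" using y by (simp add: m_assoc)
    have "X #> (g \<otimes> y) = X #> y" using rcos_eq_iff[OF sX gy y(1)] b1 gX by simp
    moreover have "(H #> g) #> (g \<otimes> y) = H #> y"
    proof -
      have a1: "(H #> g) #> (g \<otimes> y) = H #> (g \<otimes> (g \<otimes> y))" using rcos_ma[OF Hsub gc gy] .
      have a2: "(g \<otimes> (g \<otimes> y)) \<otimes> inv y = g \<otimes> g" using y by (simp add: m_assoc)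
      have "H #> (g \<otimes> (g \<otimes> y)) = H #> y" using rcos_eq_iff[OF sH m_closed[OF gc gy] y(1)] a2 gg by simp
      then show ?thesis using a1 by simp
    qed
    ultimately show ?thesis using uu vv y by (intro bexI[of _ "g \<otimes> y"]) auto
  qed
qed

lemma HV: "H \<in> VV" unfolding Vmem
  by (rule bexI[of _ "\<one>"]) (simp_all add: coset_mult_one[OF Hsub])
lemma XE: "X \<in> EE" unfolding Emem
  by (rule bexI[of _ "\<one>"]) (simp_all add: coset_mult_one[OF subgroup.subset[OF sX]])
lemma HgV: "H #> g \<in> VV" unfolding Vmem
  by (rule bexI[of _ g]) simp_all

lemma arc_trans: "arc_transitive_on VV EE II (rmult_perm G (VV \<union> EE) ` carrier G)"
  unfolding arc_transitive_on_def
proof (intro conjI ballI)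
  show "\<And>f. f \<in> rmult_perm G (VV \<union> EE) ` carrier G \<Longrightarrow> graph_aut VV EE II f" using rm_aut by blast
  fix a b assume a: "a \<in> arcs II" and b: "b \<in> arcs II"
  obtain u e v where a': "a = (u, e, v)" by (cases a) auto
  obtain u' e' v' where b': "b = (u', e', v')" by (cases b) auto
  obtain t where t: "t \<in> carrier G" "u = H #> t" "e = X #> t" "v = (H #> g) #> t"
    using arc_base a a' by blast
  obtain s where s: "s \<in> carrier G" "u' = H #> s" "e' = X #> s" "v' = (H #> g) #> s"
    using arc_base b b' by blast
  define c where "c = inv t \<otimes> s"
  have c: "c \<in> carrier G" using c_def s t by simp
  have tc: "t \<otimes> c = s" using c_def s t by (simp add: m_assoc[symmetric])
  have in1: "u \<in> VV \<union> EE" "e \<in> VV \<union> EE" "v \<in> VV \<union> EE"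
    using t VV_act[OF HV t(1)] EE_act[OF XE t(1)] VV_act[OF HgV t(1)] by simp_all
  have r1: "rmult_perm G (VV \<union> EE) c u = u'"
    using in1(1) unfolding rmult_perm_def t(2) s(2) using rcos_ma[OF Hsub t(1) c] tc by simp
  have r2: "rmult_perm G (VV \<union> EE) c e = e'"
    using in1(2) unfolding rmult_perm_def t(3) s(3) using rcos_ma[OF subgroup.subset[OF sX] t(1) c] tc by simp
  have hg: "H #> g \<subseteq> carrier G" using r_coset_subset_G[OF Hsub gc] .
  have r3: "rmult_perm G (VV \<union> EE) c v = v'"
    using in1(3) unfolding rmult_perm_def t(4) s(4) using rcos_ma[OF hg t(1) c] tc by simp
  show "\<exists>f\<in>rmult_perm G (VV \<union> EE) ` carrier G. (case a of (u, e, v) \<Rightarrow> (f u, f e, f v)) = b"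
    unfolding a' b' using r1 r2 r3 c by (intro bexI[of _ "rmult_perm G (VV \<union> EE) c"]) simp_all
qed

lemma G_arc_trans: "G_arc_transitive G VV EE II"
  unfolding G_arc_transitive_def using arc_trans .

end


lemma (in group) set_mult_memE:
  assumes "z \<in> A <#> B" obtains a b where "a \<in> A" "b \<in> B" "z = a \<otimes> b"
  using assms unfolding set_mult_def by blast

lemma (in cgX) baseE_eq: "base_E VV EE II = {{H #> y, H #> (g \<otimes> y)} | y. y \<in> carrier G}"
proof (rule Set.set_eqI)
  fix e
  show "e \<in> base_E VV EE II \<longleftrightarrow> e \<in> {{H #> y, H #> (g \<otimes> y)} | y. y \<in> carrier G}"
  proof
    assume "e \<in> base_E VV EE II"
    then obtain u v where uv: "e = {u, v}" "adjacent VV EE II u v" unfolding base_E_def by blast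
    from adj_iff[THEN iffD1, OF uv(2)] obtain y where "y \<in> carrier G" "{u, v} = {H #> y, H #> (g \<otimes> y)}" by blast
    then show "e \<in> {{H #> y, H #> (g \<otimes> y)} | y. y \<in> carrier G}" unfolding mem_Collect_eq
      using uv(1) by (intro exI[of _ y]) simp
  next
    assume "e \<in> {{H #> y, H #> (g \<otimes> y)} | y. y \<in> carrier G}"
    then obtain y where y: "y \<in> carrier G" "e = {H #> y, H #> (g \<otimes> y)}" by blast
    have "H #> y \<noteq> H #> (g \<otimes> y) \<and> (\<exists>z\<in>carrier G. {H #> y, H #> (g \<otimes> y)} = {H #> z, H #> (g \<otimes> z)})"
      using Hy_ne[OF y(1)] y(1) by blast
    then have "adjacent VV EE II (H #> y) (H #> (g \<otimes> y))" by (rule adj_iff[THEN iffD2])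
    then show "e \<in> base_E VV EE II" unfolding base_E_def mem_Collect_eq
      using y(2) by (intro exI[of _ "H #> y"] exI[of _ "H #> (g \<otimes> y)"]) simp
  qed
qed

context cg
begin

abbreviation "SE \<equiv> {{H #> y, H #> (g \<otimes> y)} | y. y \<in> carrier G}"

lemma SimpCos_E_eq: "SimpCos_E G H g = SE"
proof (rule Set.set_eqI)
  fix e
  show "e \<in> SimpCos_E G H g \<longleftrightarrow> e \<in> SE"
  proof
    assume "e \<in> SimpCos_E G H g"
    then obtain x y where xy: "e = {H #> x, H #> y}" "x \<in> carrier G" "y \<in> carrier G"
      "y \<otimes> inv x \<in> (H <#> {g}) <#> H" unfolding SimpCos_E_def by blast
    from xy(4) obtain c h2 where c: "c \<in> H <#> {g}" "h2 \<in> H" "y \<otimes> inv x = c \<otimes> h2"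
      by (rule set_mult_memE)
    from c(1) obtain h1 g' where h1: "h1 \<in> H" "g' \<in> {g}" "c = h1 \<otimes> g'" by (rule set_mult_memE)
    have h1': "c = h1 \<otimes> g" using h1 by simp
    have h1c: "h1 \<in> carrier G" and h2c: "h2 \<in> carrier G" using h1 c Hc by auto
    define z where "z = h2 \<otimes> x"
    have z: "z \<in> carrier G" unfolding z_def using h2c xy(2) by simp
    have "x \<otimes> inv z = inv h2" unfolding z_def using xy(2) h2c by (simp add: inv_mult_group m_assoc)
    then have e1: "H #> x = H #> z" using rcos_eq_iff[OF sH xy(2) z] Hi[OF c(2)] by simp
    have "y = (y \<otimes> inv x) \<otimes> x" using xy(2,3) by (simp add: m_assoc)
    also have "\<dots> = h1 \<otimes> g \<otimes> h2 \<otimes> x" unfolding c(3) h1' ..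
    finally have yy: "y = h1 \<otimes> g \<otimes> h2 \<otimes> x" .
    have "y \<otimes> inv (g \<otimes> z) = h1" unfolding yy z_def using h1c h2c xy(2)
      by (simp add: inv_mult_group m_assoc)
    then have e2: "H #> y = H #> (g \<otimes> z)" using rcos_eq_iff[OF sH xy(3) m_closed[OF gc z]] h1 by simp
    show "e \<in> SE" unfolding mem_Collect_eq using xy(1) e1 e2 z by (intro exI[of _ z]) simp
  next
    assume "e \<in> SE"
    then obtain y where y: "y \<in> carrier G" "e = {H #> y, H #> (g \<otimes> y)}" by blast
    have "(g \<otimes> y) \<otimes> inv y = (\<one> \<otimes> g) \<otimes> \<one>" using y by (simp add: m_assoc)
    moreover have "\<one> \<otimes> g \<in> H <#> {g}" unfolding set_mult_def using H1 by blast
    then have "(\<one> \<otimes> g) \<otimes> \<one> \<in> (H <#> {g}) <#> H" unfolding set_mult_def[of _ "H <#> {g}"] using H1 by blast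
    ultimately have "(g \<otimes> y) \<otimes> inv y \<in> (H <#> {g}) <#> H" by simp
    then show "e \<in> SimpCos_E G H g" unfolding SimpCos_E_def mem_Collect_eq using y
      by (intro exI[of _ y] exI[of _ "g \<otimes> y"]) simp
  qed
qed

lemma ends_L_iff:
  assumes y: "y \<in> carrier G" and z: "z \<in> carrier G"
  shows "{H #> y, H #> (g \<otimes> y)} = {H #> z, H #> (g \<otimes> z)} \<longleftrightarrow> L #> y = L #> z"
proof
  assume "L #> y = L #> z"
  then have "ends (Cos_I G H L) (L #> y) = ends (Cos_I G H L) (L #> z)" by simp
  then show "{H #> y, H #> (g \<otimes> y)} = {H #> z, H #> (g \<otimes> z)}" using GL.ends_eq y z by simp
next
  assume "{H #> y, H #> (g \<otimes> y)} = {H #> z, H #> (g \<otimes> z)}"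
  then have "(H #> y = H #> z \<and> H #> (g \<otimes> y) = H #> (g \<otimes> z)) \<or> (H #> y = H #> (g \<otimes> z) \<and> H #> (g \<otimes> y) = H #> z)"
    by (simp add: doubleton_eq_iff)
  then have "y \<otimes> inv z \<in> L"
  proof
    assume a: "H #> y = H #> z \<and> H #> (g \<otimes> y) = H #> (g \<otimes> z)"
    have 1: "y \<otimes> inv z \<in> H" using a rcos_eq_iff[OF sH y z] by simp
    have "(g \<otimes> y) \<otimes> inv (g \<otimes> z) \<in> H" using a rcos_eq_iff[OF sH m_closed[OF gc y] m_closed[OF gc z]] by simp
    moreover have "(g \<otimes> y) \<otimes> inv (g \<otimes> z) = g \<otimes> (y \<otimes> inv z) \<otimes> inv g" using y z by (simp add: inv_mult_group m_assoc)
    ultimately have "y \<otimes> inv z \<in> K" using 1 K_mem by simp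
    then show ?thesis using KL by blast
  next
    assume a: "H #> y = H #> (g \<otimes> z) \<and> H #> (g \<otimes> y) = H #> z"
    have 1: "y \<otimes> inv (g \<otimes> z) \<in> H" using a rcos_eq_iff[OF sH y m_closed[OF gc z]] by simp
    have 2: "(g \<otimes> y) \<otimes> inv z \<in> H" using a rcos_eq_iff[OF sH m_closed[OF gc y] z] by simp
    define w where "w = y \<otimes> inv z \<otimes> inv g"
    have w1: "w \<in> H" using 1 y z unfolding w_def by (simp add: inv_mult_group m_assoc)
    have "g \<otimes> w \<otimes> inv g = ((g \<otimes> y) \<otimes> inv z) \<otimes> (inv g \<otimes> inv g)" unfolding w_def using y z by (simp add: m_assoc)
    then have "g \<otimes> w \<otimes> inv g \<in> H" using Hm[OF 2 gigi] by simp
    then have wK: "w \<in> K" using w1 K_mem by simp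
    have "(y \<otimes> inv z) \<otimes> inv g = w" unfolding w_def ..
    then show ?thesis using wK L_mem y z by simp
  qed
  then show "L #> y = L #> z" using rcos_eq_iff[OF sL y z] by simp
qed

lemma L_simple: "simple_graph (Cos_V G H) (Cos_E G L) (Cos_I G H L)"
  unfolding simple_graph_def
proof (intro conjI ballI impI)
  show "is_graph (Cos_V G H) (Cos_E G L) (Cos_I G H L)" by (rule GL.is_graph)
  fix e e' assume e: "e \<in> Cos_E G L" and e': "e' \<in> Cos_E G L" and ee: "ends (Cos_I G H L) e = ends (Cos_I G H L) e'"
  obtain y where y: "y \<in> carrier G" "e = L #> y" using e GL.Emem by blast
  obtain z where z: "z \<in> carrier G" "e' = L #> z" using e' GL.Emem by blast
  have "{H #> y, H #> (g \<otimes> y)} = {H #> z, H #> (g \<otimes> z)}" using ee y z GL.ends_eq by simp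
  then show "e = e'" using ends_L_iff[OF y(1) z(1)] y z by simp
qed

lemma ends_JL: "y \<in> carrier G \<Longrightarrow> ends (Cos_I G H J) (J #> y) = ends (Cos_I G H L) (L #> y)"
  using GJ.ends_eq GL.ends_eq by simp

end


lemma doubleton_sub_eq: "a \<noteq> b \<Longrightarrow> a \<in> {c, d} \<Longrightarrow> b \<in> {c, d} \<Longrightarrow> {a, b} = {c, d}"
  by auto

locale cgf = cg +
  assumes finH: "finite (rcosets\<^bsub>G\<lparr>carrier := H\<rparr>\<^esub> (H \<inter> J))"
begin

lemma sHJ: "subgroup (H \<inter> J) G" using subgroups_Inter_pair[OF sH sJ] .

lemma finH': "finite ((\<lambda>h. (H \<inter> J) #> h) ` H)" using finH rcosets_sub by metis

lemma HJ_coset_K: "a \<in> H \<Longrightarrow> b \<in> H \<Longrightarrow> (H \<inter> J) #> a = (H \<inter> J) #> b \<Longrightarrow> K #> a = K #> b"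
  using rcos_eq_iff[OF sHJ Hc Hc] rcos_eq_iff[OF sK Hc Hc] HJ_K by blast

lemma finK: "finite ((\<lambda>h. K #> h) ` H)"
  by (rule img_finite_coarser[OF _ finH']) (use HJ_coset_K in blast)

lemma valency:
  assumes x: "x \<in> carrier G"
  shows "finite (neighbours (Cos_V G H) (Cos_E G J) (Cos_I G H J) (H #> x))"
    "card (neighbours (Cos_V G H) (Cos_E G J) (Cos_I G H J) (H #> x)) = idx G H K"
proof -
  have rel: "\<forall>a\<in>H. \<forall>b\<in>H. H #> (g \<otimes> a \<otimes> x) = H #> (g \<otimes> b \<otimes> x) \<longleftrightarrow> K #> a = K #> b"
  proof (intro ballI)
    fix a b assume a: "a \<in> H" and b: "b \<in> H"
    have ac: "a \<in> carrier G" and bc: "b \<in> carrier G" using a b Hc by auto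
    have e: "(g \<otimes> a \<otimes> x) \<otimes> inv (g \<otimes> b \<otimes> x) = g \<otimes> (a \<otimes> inv b) \<otimes> inv g"
      using ac bc x by (simp add: inv_mult_group m_assoc)
    have ab: "a \<otimes> inv b \<in> H" using Hm[OF a Hi[OF b]] .
    have "H #> (g \<otimes> a \<otimes> x) = H #> (g \<otimes> b \<otimes> x) \<longleftrightarrow> g \<otimes> (a \<otimes> inv b) \<otimes> inv g \<in> H"
      using rcos_eq_iff[OF sH, of "g \<otimes> a \<otimes> x" "g \<otimes> b \<otimes> x"] ac bc x e by simp
    also have "\<dots> \<longleftrightarrow> a \<otimes> inv b \<in> K" using K_mem ab by simp
    also have "\<dots> \<longleftrightarrow> K #> a = K #> b" using rcos_eq_iff[OF sK ac bc] by simp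
    finally show "H #> (g \<otimes> a \<otimes> x) = H #> (g \<otimes> b \<otimes> x) \<longleftrightarrow> K #> a = K #> b" .
  qed
  have N: "neighbours (Cos_V G H) (Cos_E G J) (Cos_I G H J) (H #> x) = (\<lambda>h. H #> (g \<otimes> h \<otimes> x)) ` H"
    using GJ.neighbours_eq[OF x] .
  show "finite (neighbours (Cos_V G H) (Cos_E G J) (Cos_I G H J) (H #> x))"
    unfolding N using img_card_rel(2)[OF rel] finK by simp
  show "card (neighbours (Cos_V G H) (Cos_E G J) (Cos_I G H J) (H #> x)) = idx G H K"
    unfolding N idx_def rcosets_sub using img_card_rel(1)[OF rel] .
qed

lemma loc_fin_gen:
  assumes "cgX G H J g K L X"
  shows "locally_finite (Cos_V G H) (Cos_E G X) (Cos_I G H X)"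
proof -
  interpret X: cgX G H J g K L X by fact
  show ?thesis unfolding locally_finite_def
  proof
    fix v assume "v \<in> Cos_V G H"
    then obtain x where x: "x \<in> carrier G" "v = H #> x" unfolding X.Vmem by blast
    have "finite ((\<lambda>h. X #> (h \<otimes> x)) ` H)"
    proof (rule img_finite_coarser[OF _ finH'], intro ballI impI)
      fix a b assume a: "a \<in> H" and b: "b \<in> H" and e: "(H \<inter> J) #> a = (H \<inter> J) #> b"
      then have "a \<otimes> inv b \<in> X" using rcos_eq_iff[OF sHJ Hc Hc] X.HJX by blast
      then have "X #> a = X #> b" using rcos_eq_iff[OF X.sX Hc[OF a] Hc[OF b]] by simp
      then show "X #> (a \<otimes> x) = X #> (b \<otimes> x)" using rcos_mult_cancel[OF X.sX Hc[OF a] Hc[OF b] x(1)] by simp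
    qed
    then show "finite {e \<in> Cos_E G X. (v, e) \<in> Cos_I G H X}"
      using X.edges_at[OF x(1)] x(2) finite_subset by simp
  qed
qed

lemma finKHJ: "finite ((\<lambda>k. (H \<inter> J) #> k) ` K)"
proof -
  have "(\<lambda>k. (H \<inter> J) #> k) ` K \<subseteq> (\<lambda>h. (H \<inter> J) #> h) ` H" using K_mem by blast
  then show ?thesis using finH' finite_subset by blast
qed

lemma JL_img: "(\<lambda>l. J #> l) ` L = (\<lambda>k. J #> k) ` K"
proof
  show "(\<lambda>k. J #> k) ` K \<subseteq> (\<lambda>l. J #> l) ` L" using KL by blast
  show "(\<lambda>l. J #> l) ` L \<subseteq> (\<lambda>k. J #> k) ` K"
  proof
    fix A assume "A \<in> (\<lambda>l. J #> l) ` L"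
    then obtain l where l: "l \<in> L" "A = J #> l" by blast
    have lc: "l \<in> carrier G" using l L_mem by blast
    show "A \<in> (\<lambda>k. J #> k) ` K"
    proof (cases "l \<in> K")
      case True then show ?thesis using l by blast
    next
      case False
      then have c: "l \<otimes> inv g \<in> K" using l L_mem by blast
      have k': "inv g \<otimes> l \<in> K" using conjK2[OF c] lc by (simp add: m_assoc)
      have "l \<otimes> inv (inv g \<otimes> l) = g" using lc by (simp add: inv_mult_group m_assoc)
      then have "J #> l = J #> (inv g \<otimes> l)" using rcos_eq_iff[OF sJ lc, of "inv g \<otimes> l"] lc gJ by simp
      then show ?thesis using l(2) k' by blast
    qed
  qed
qed

lemma idxLJ: "card ((\<lambda>l. J #> l) ` L) = idx G K (H \<inter> J)" "finite ((\<lambda>l. J #> l) ` L)"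
proof -
  have rel: "\<forall>a\<in>K. \<forall>b\<in>K. J #> a = J #> b \<longleftrightarrow> (H \<inter> J) #> a = (H \<inter> J) #> b"
  proof (intro ballI)
    fix a b assume a: "a \<in> K" and b: "b \<in> K"
    have ab: "a \<otimes> inv b \<in> H" using a b K_mem Hm Hi by blast
    show "J #> a = J #> b \<longleftrightarrow> (H \<inter> J) #> a = (H \<inter> J) #> b"
      using rcos_eq_iff[OF sJ Kc[OF a] Kc[OF b]] rcos_eq_iff[OF sHJ Kc[OF a] Kc[OF b]] ab by simp
  qed
  show "card ((\<lambda>l. J #> l) ` L) = idx G K (H \<inter> J)"
    unfolding JL_img idx_def rcosets_sub using img_card_rel(1)[OF rel] .
  show "finite ((\<lambda>l. J #> l) ` L)" unfolding JL_img using img_card_rel(2)[OF rel] finKHJ by simp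
qed

lemma idxLK: "idx G L K = 2"
proof -
  have "(\<lambda>l. K #> l) ` L = {K, K #> g}"
  proof
    show "(\<lambda>l. K #> l) ` L \<subseteq> {K, K #> g}"
    proof
      fix A assume "A \<in> (\<lambda>l. K #> l) ` L"
      then obtain l where l: "l \<in> L" "A = K #> l" by blast
      have lc: "l \<in> carrier G" using l L_mem by blast
      show "A \<in> {K, K #> g}"
      proof (cases "l \<in> K")
        case True then show ?thesis using l coset_join2[OF lc sK] by simp
      next
        case False
        then have "l \<otimes> inv g \<in> K" using l L_mem by blast
        then show ?thesis using l rcos_eq_iff[OF sK lc gc] by simp
      qed
    qed
    have "K = K #> \<one>" using coset_mult_one[OF subgroup.subset[OF sK]] by simp
    then show "{K, K #> g} \<subseteq> (\<lambda>l. K #> l) ` L" using gL subgroup.one_closed[OF sL] by blast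
  qed
  moreover have "K \<noteq> K #> g"
  proof
    assume "K = K #> g"
    then have "g \<in> K" using rcos_self[OF gc sK] by simp
    then show False using K_mem gH by blast
  qed
  ultimately show ?thesis unfolding idx_def rcosets_sub by simp
qed

lemma shared:
  assumes adj: "adjacent (Cos_V G H) (Cos_E G J) (Cos_I G H J) u v"
  shows "finite (shared_edges (Cos_E G J) (Cos_I G H J) u v) \<and> card (shared_edges (Cos_E G J) (Cos_I G H J) u v) = idx G K (H \<inter> J)"
proof -
  from GJ.adj_iff[THEN iffD1, OF adj] obtain y where y: "u \<noteq> v" "y \<in> carrier G" "{u, v} = {H #> y, H #> (g \<otimes> y)}"
    by blast
  have S: "shared_edges (Cos_E G J) (Cos_I G H J) u v = (\<lambda>l. J #> (l \<otimes> y)) ` L"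
  proof (rule Set.set_eqI)
    fix e
    show "e \<in> shared_edges (Cos_E G J) (Cos_I G H J) u v \<longleftrightarrow> e \<in> (\<lambda>l. J #> (l \<otimes> y)) ` L"
    proof
      assume "e \<in> shared_edges (Cos_E G J) (Cos_I G H J) u v"
      then have e: "e \<in> Cos_E G J" "(u, e) \<in> Cos_I G H J" "(v, e) \<in> Cos_I G H J"
        unfolding shared_edges_def by auto
      from e(1) obtain z where z: "z \<in> carrier G" "e = J #> z" unfolding GJ.Emem by blast
      have "u \<in> {H #> z, H #> (g \<otimes> z)}" "v \<in> {H #> z, H #> (g \<otimes> z)}"
        using e(2,3) unfolding z(2) GJ.inc_iff_ends GJ.ends_eq[OF z(1)] by simp_all
      then have "{u, v} = {H #> z, H #> (g \<otimes> z)}" by (rule doubleton_sub_eq[OF y(1)])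
      then have "{H #> y, H #> (g \<otimes> y)} = {H #> z, H #> (g \<otimes> z)}" using y(3) by simp
      then have "L #> y = L #> z" using ends_L_iff[OF y(2) z(1)] by simp
      then have zl: "z \<otimes> inv y \<in> L" using rcos_eq_iff[OF sL z(1) y(2)] by simp
      have "z = (z \<otimes> inv y) \<otimes> y" using z y by (simp add: m_assoc)
      then have "e = J #> ((z \<otimes> inv y) \<otimes> y)" using z(2) by simp
      then show "e \<in> (\<lambda>l. J #> (l \<otimes> y)) ` L"
        by (rule image_eqI[of e "\<lambda>l. J #> (l \<otimes> y)" "z \<otimes> inv y"]) (rule zl)
    next
      assume "e \<in> (\<lambda>l. J #> (l \<otimes> y)) ` L"
      then obtain l where l: "l \<in> L" "e = J #> (l \<otimes> y)" by blast
      have lc: "l \<in> carrier G" using l L_mem by blast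
      have z: "l \<otimes> y \<in> carrier G" using lc y by simp
      have "(l \<otimes> y) \<otimes> inv y = l" using lc y by (simp add: m_assoc)
      then have "L #> (l \<otimes> y) = L #> y" using rcos_eq_iff[OF sL z y(2)] l by simp
      then have "{H #> y, H #> (g \<otimes> y)} = {H #> (l \<otimes> y), H #> (g \<otimes> (l \<otimes> y))}"
        using ends_L_iff[OF y(2) z] by simp
      then have uv: "{u, v} = ends (Cos_I G H J) e" unfolding l(2) GJ.ends_eq[OF z] y(3) .
      have "u \<in> ends (Cos_I G H J) e" "v \<in> ends (Cos_I G H J) e" unfolding uv[symmetric] by simp_all
      moreover have "e \<in> Cos_E G J" unfolding GJ.Emem l(2) using z by blast
      ultimately show "e \<in> shared_edges (Cos_E G J) (Cos_I G H J) u v"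
        unfolding shared_edges_def GJ.inc_iff_ends[symmetric] by simp
    qed
  qed
  have rel: "\<forall>a\<in>L. \<forall>b\<in>L. J #> (a \<otimes> y) = J #> (b \<otimes> y) \<longleftrightarrow> J #> a = J #> b"
    using rcos_mult_cancel[OF sJ _ _ y(2)] L_mem by blast
  show ?thesis unfolding S using img_card_rel[OF rel] idxLJ by simp
qed

end


context cg
begin

abbreviation "Adj \<equiv> {(x, y). adjacent (Cos_V G H) (Cos_E G J) (Cos_I G H J) x y}"

lemma adj_V: "adjacent (Cos_V G H) (Cos_E G J) (Cos_I G H J) u v \<Longrightarrow> u \<in> Cos_V G H \<and> v \<in> Cos_V G H"
  unfolding adjacent_def by blast

lemma adj_sym: "adjacent (Cos_V G H) (Cos_E G J) (Cos_I G H J) u v \<Longrightarrow> adjacent (Cos_V G H) (Cos_E G J) (Cos_I G H J) v u"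
  unfolding adjacent_def by blast

lemma adj_act:
  assumes adj: "adjacent (Cos_V G H) (Cos_E G J) (Cos_I G H J) u v" and a: "a \<in> carrier G"
  shows "adjacent (Cos_V G H) (Cos_E G J) (Cos_I G H J) (u #> a) (v #> a)"
proof -
  from GJ.adj_iff[THEN iffD1, OF adj] obtain y where y: "u \<noteq> v" "y \<in> carrier G" "{u, v} = {H #> y, H #> (g \<otimes> y)}"
    by blast
  have uv: "u \<in> Cos_V G H" "v \<in> Cos_V G H" using adj_V[OF adj] by auto
  have "(\<lambda>A. A #> a) ` {u, v} = (\<lambda>A. A #> a) ` {H #> y, H #> (g \<otimes> y)}" using y(3) by simp
  then have "{u #> a, v #> a} = {(H #> y) #> a, (H #> (g \<otimes> y)) #> a}" by simp
  also have "\<dots> = {H #> (y \<otimes> a), H #> (g \<otimes> (y \<otimes> a))}"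
    using rcos_ma[OF Hsub y(2) a] rcos_ma[OF Hsub m_closed[OF gc y(2)] a] y(2) a by (simp add: m_assoc)
  finally have e: "{u #> a, v #> a} = {H #> (y \<otimes> a), H #> (g \<otimes> (y \<otimes> a))}" .
  have "u #> a \<noteq> v #> a"
  proof
    assume "u #> a = v #> a"
    then have "(u #> a) #> inv a = (v #> a) #> inv a" by simp
    then show False using GJ.act_inv1 uv a y(1) by simp
  qed
  then have "u #> a \<noteq> v #> a \<and> (\<exists>z\<in>carrier G. {u #> a, v #> a} = {H #> z, H #> (g \<otimes> z)})"
    using e y(2) a by (intro conjI bexI[of _ "y \<otimes> a"]) simp_all
  then show ?thesis by (rule GJ.adj_iff[THEN iffD2])
qed

lemma rtr_act: "(u, v) \<in> Adj\<^sup>* \<Longrightarrow> a \<in> carrier G \<Longrightarrow> (u #> a, v #> a) \<in> Adj\<^sup>*"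
proof (induction rule: rtrancl_induct)
  case base then show ?case by simp
next
  case (step y z)
  then have "(y #> a, z #> a) \<in> Adj" using adj_act by simp
  then show ?case using step by (meson rtrancl_into_rtrancl)
qed

lemma rtr_sym: "(u, v) \<in> Adj\<^sup>* \<Longrightarrow> (v, u) \<in> Adj\<^sup>*"
proof (induction rule: rtrancl_induct)
  case base then show ?case by simp
next
  case (step y z)
  then have "(z, y) \<in> Adj" using adj_sym by simp
  then show ?case using step by (meson converse_rtrancl_into_rtrancl)
qed

lemma H_eq1: "H #> \<one> = H" using coset_mult_one[OF Hsub] .

lemma gen_step: "h \<in> H \<union> J \<Longrightarrow> (H, H #> h) \<in> Adj\<^sup>*"
proof -
  assume h: "h \<in> H \<union> J"
  then have hc: "h \<in> carrier G" using Hc Jc by blast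
  show ?thesis
  proof (cases "h \<in> H")
    case True then show ?thesis using coset_join2[OF hc sH] by simp
  next
    case False
    then have "h \<otimes> inv g \<in> H" using h splitJ by blast
    then have e: "H #> h = H #> g" using rcos_eq_iff[OF sH hc gc] by simp
    have "adjacent (Cos_V G H) (Cos_E G J) (Cos_I G H J) (H #> \<one>) (H #> (g \<otimes> \<one> \<otimes> \<one>))"
      using GJ.adj_char[OF one_closed] H1 by blast
    then have "(H, H #> g) \<in> Adj" using H_eq1 by simp
    then have "(H, H #> g) \<in> Adj\<^sup>*" by (rule r_into_rtrancl)
    then show ?thesis using e by simp
  qed
qed

lemma conn_gen: "x \<in> generate G (H \<union> J) \<Longrightarrow> (H, H #> x) \<in> Adj\<^sup>*"
proof (induction rule: generate.induct)
  case one then show ?case using H_eq1 by simp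
next
  case (incl h) then show ?case using gen_step by blast
next
  case (inv h)
  then have "inv h \<in> H \<union> J" using Hi Ji by blast
  then show ?case using gen_step by blast
next
  case (eng h1 h2)
  have c: "h1 \<in> carrier G" "h2 \<in> carrier G"
    using eng.hyps generate_in_carrier[of "H \<union> J"] Hsub Jsub by auto
  have "(H #> h2, (H #> h1) #> h2) \<in> Adj\<^sup>*" using rtr_act[OF eng.IH(1) c(2)] .
  then have "(H #> h2, H #> (h1 \<otimes> h2)) \<in> Adj\<^sup>*" using rcos_ma[OF Hsub c] by simp
  then show ?case using eng.IH(2) by (meson rtrancl_trans)
qed

lemma conn_back: "(H, v) \<in> Adj\<^sup>* \<Longrightarrow> \<exists>x\<in>generate G (H \<union> J). v = H #> x"
proof (induction rule: rtrancl_induct)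
  case base then show ?case using H_eq1 generate.one by metis
next
  case (step y z)
  then obtain x where x: "x \<in> generate G (H \<union> J)" "y = H #> x" by blast
  have xc: "x \<in> carrier G" using generate_in_carrier[of "H \<union> J"] Hsub Jsub x(1) by auto
  have "adjacent (Cos_V G H) (Cos_E G J) (Cos_I G H J) (H #> x) z" using step x by simp
  then obtain h where h: "h \<in> H" "z = H #> (g \<otimes> h \<otimes> x)" using GJ.adj_char[OF xc] by blast
  have g1: "g \<in> generate G (H \<union> J)" using gJ by (intro generate.incl) simp
  have h1: "h \<in> generate G (H \<union> J)" using h(1) by (intro generate.incl) simp
  have "g \<otimes> h \<otimes> x \<in> generate G (H \<union> J)" using generate.eng[OF generate.eng[OF g1 h1] x(1)] .
  then show ?case using h(2) by blast
qed

lemma connected_iff: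
  "connected_graph (Cos_V G H) (Cos_E G J) (Cos_I G H J) \<longleftrightarrow> carrier G = generate G (H \<union> J)"
proof
  assume c: "connected_graph (Cos_V G H) (Cos_E G J) (Cos_I G H J)"
  show "carrier G = generate G (H \<union> J)"
  proof
    show "generate G (H \<union> J) \<subseteq> carrier G" using generate_incl Hsub Jsub by simp
    show "carrier G \<subseteq> generate G (H \<union> J)"
    proof
      fix a assume a: "a \<in> carrier G"
      have "H \<in> Cos_V G H" "H #> a \<in> Cos_V G H" using GJ.HV GJ.Vmem a by auto
      then have "(H, H #> a) \<in> Adj\<^sup>*" using c unfolding connected_graph_def by blast
      then obtain x where x: "x \<in> generate G (H \<union> J)" "H #> a = H #> x" using conn_back by blast
      have xc: "x \<in> carrier G" using generate_in_carrier[of "H \<union> J"] Hsub Jsub x(1) by auto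
      have "a \<otimes> inv x \<in> H" using rcos_eq_iff[OF sH a xc] x by simp
      then have "a \<otimes> inv x \<in> generate G (H \<union> J)" by (intro generate.incl) simp
      then have "(a \<otimes> inv x) \<otimes> x \<in> generate G (H \<union> J)" using x(1) by (rule generate.eng)
      then show "a \<in> generate G (H \<union> J)" using a xc by (simp add: m_assoc)
    qed
  qed
next
  assume c: "carrier G = generate G (H \<union> J)"
  show "connected_graph (Cos_V G H) (Cos_E G J) (Cos_I G H J)"
    unfolding connected_graph_def
  proof (intro ballI)
    fix u v assume u: "u \<in> Cos_V G H" and v: "v \<in> Cos_V G H"
    obtain x where x: "x \<in> carrier G" "u = H #> x" using u GJ.Vmem by blast
    obtain y where y: "y \<in> carrier G" "v = H #> y" using v GJ.Vmem by blast
    have "(H, u) \<in> Adj\<^sup>*" "(H, v) \<in> Adj\<^sup>*" using conn_gen x y c by auto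
    then show "(u, v) \<in> Adj\<^sup>*" using rtr_sym by (meson rtrancl_trans)
  qed
qed

end


lemma (in group) conj_gen:
  assumes X: "X \<subseteq> carrier G" and x: "x \<in> carrier G"
  shows "z \<in> conj_set G X x \<longleftrightarrow> z \<in> carrier G \<and> x \<otimes> z \<otimes> inv x \<in> X"
proof
  assume "z \<in> conj_set G X x"
  then obtain h where h: "h \<in> X" "z = inv x \<otimes> (h \<otimes> x)"
    unfolding conj_set_def l_coset_def r_coset_def by blast
  have hc: "h \<in> carrier G" using h X by blast
  show "z \<in> carrier G \<and> x \<otimes> z \<otimes> inv x \<in> X" using h hc x by (simp add: m_assoc)
next
  assume a: "z \<in> carrier G \<and> x \<otimes> z \<otimes> inv x \<in> X"
  have "z = inv x \<otimes> ((x \<otimes> z \<otimes> inv x) \<otimes> x)" using a x by (simp add: m_assoc)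
  then show "z \<in> conj_set G X x" using a
    unfolding conj_set_def l_coset_def r_coset_def by blast
qed

context cg
begin

abbreviation "SS \<equiv> Cos_V G H \<union> Cos_E G J"
abbreviation "rm \<equiv> rmult_perm G SS"

lemma rm_app: "A \<in> SS \<Longrightarrow> rm a A = A #> a" unfolding rmult_perm_def by simp

lemma rm_Bij: assumes a: "a \<in> carrier G" shows "rm a \<in> Bij SS"
proof -
  have ia: "inv a \<in> carrier G" using a by simp
  have b: "bij_betw (\<lambda>A. A #> a) SS SS"
  proof (rule bij_betw_byWitness[where f' = "\<lambda>A. A #> inv a"])
    show "\<forall>A\<in>SS. A #> a #> inv a = A" using GJ.act_inv1 a by blast
    show "\<forall>A\<in>SS. A #> inv a #> a = A" using GJ.act_inv2 a by blast
    show "(\<lambda>A. A #> a) ` SS \<subseteq> SS" using GJ.S_act a by blast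
    show "(\<lambda>A. A #> inv a) ` SS \<subseteq> SS" using GJ.S_act ia by blast
  qed
  have "bij_betw (rm a) SS SS" using b by (rule bij_betw_cong[THEN iffD1, rotated]) (simp add: rm_app)
  moreover have "rm a \<in> extensional SS" unfolding rmult_perm_def by simp
  ultimately show ?thesis unfolding Bij_def by simp
qed

lemma rm_mult:
  assumes a: "a \<in> carrier G" and b: "b \<in> carrier G"
  shows "rm a \<otimes>\<^bsub>BijGroup SS\<^esub> rm b = rm (b \<otimes> a)"
proof -
  have "rm a \<otimes>\<^bsub>BijGroup SS\<^esub> rm b = compose SS (rm a) (rm b)"
    using rm_Bij[OF a] rm_Bij[OF b] unfolding BijGroup_def by simp
  also have "\<dots> = rm (b \<otimes> a)" unfolding compose_def rmult_perm_def
  proof (rule restrict_ext)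
    fix A assume A: "A \<in> SS"
    have "A #> b \<in> SS" using GJ.S_act[OF A b] .
    then show "restrict (\<lambda>A. A #> a) SS (restrict (\<lambda>A. A #> b) SS A) = A #> (b \<otimes> a)"
      using A GJ.S_sub[OF A] a b by (simp add: coset_mult_assoc)
  qed
  finally show ?thesis .
qed

definition "rho a = rm (inv a)"

lemma rho_hom: "rho \<in> hom G (BijGroup SS)"
  unfolding hom_def
proof (intro CollectI conjI ballI)
  show "rho \<in> carrier G \<rightarrow> carrier (BijGroup SS)" unfolding rho_def BijGroup_def using rm_Bij by simp
  fix x y assume x: "x \<in> carrier G" and y: "y \<in> carrier G"
  show "rho (x \<otimes> y) = rho x \<otimes>\<^bsub>BijGroup SS\<^esub> rho y"
    unfolding rho_def using rm_mult[OF inv_closed[OF x] inv_closed[OF y]] x y by (simp add: inv_mult_group)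
qed

lemma rho_img: "rho ` carrier G = rm ` carrier G"
proof
  show "rho ` carrier G \<subseteq> rm ` carrier G" unfolding rho_def by auto
  show "rm ` carrier G \<subseteq> rho ` carrier G"
  proof
    fix f assume "f \<in> rm ` carrier G"
    then obtain a where a: "a \<in> carrier G" "f = rm a" by blast
    then have "f = rho (inv a)" unfolding rho_def by simp
    then show "f \<in> rho ` carrier G" using a by blast
  qed
qed

lemma rm_subgroup: "subgroup (rm ` carrier G) (BijGroup SS)"
proof -
  have "group_hom G (BijGroup SS) rho"
    unfolding group_hom_def group_hom_axioms_def using is_group group_BijGroup rho_hom by simp
  then show ?thesis using group_hom.img_is_subgroup rho_img by metis
qed

lemma fixall:
  assumes a: "a \<in> carrier G"
  shows "(\<forall>A\<in>SS. A #> a = A) \<longleftrightarrow> (\<forall>x\<in>carrier G. x \<otimes> a \<otimes> inv x \<in> H \<inter> J)"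
proof
  assume f: "\<forall>A\<in>SS. A #> a = A"
  show "\<forall>x\<in>carrier G. x \<otimes> a \<otimes> inv x \<in> H \<inter> J"
  proof
    fix x assume x: "x \<in> carrier G"
    have "H #> x \<in> SS" "J #> x \<in> SS" using GJ.Vmem GJ.Emem x by blast+
    then have "(H #> x) #> a = H #> x" "(J #> x) #> a = J #> x" using f by auto
    then have "H #> (x \<otimes> a) = H #> x" "J #> (x \<otimes> a) = J #> x"
      using rcos_ma[OF Hsub x a] rcos_ma[OF Jsub x a] by simp_all
    then show "x \<otimes> a \<otimes> inv x \<in> H \<inter> J"
      using rcos_eq_iff[OF sH m_closed[OF x a] x] rcos_eq_iff[OF sJ m_closed[OF x a] x] by simp
  qed
next
  assume f: "\<forall>x\<in>carrier G. x \<otimes> a \<otimes> inv x \<in> H \<inter> J"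
  show "\<forall>A\<in>SS. A #> a = A"
  proof
    fix A assume "A \<in> SS"
    then show "A #> a = A"
    proof
      assume "A \<in> Cos_V G H"
      then obtain x where x: "x \<in> carrier G" "A = H #> x" using GJ.Vmem by blast
      have "H #> (x \<otimes> a) = H #> x" using rcos_eq_iff[OF sH m_closed[OF x(1) a] x(1)] f x by simp
      then show ?thesis using x rcos_ma[OF Hsub x(1) a] by simp
    next
      assume "A \<in> Cos_E G J"
      then obtain x where x: "x \<in> carrier G" "A = J #> x" using GJ.Emem by blast
      have "J #> (x \<otimes> a) = J #> x" using rcos_eq_iff[OF sJ m_closed[OF x(1) a] x(1)] f x by simp
      then show ?thesis using x rcos_ma[OF Jsub x(1) a] by simp
    qed
  qed
qed

lemma core_mem: "a \<in> core G (H \<inter> J) \<longleftrightarrow> a \<in> carrier G \<and> (\<forall>x\<in>carrier G. x \<otimes> a \<otimes> inv x \<in> H \<inter> J)"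
proof -
  have HJc: "H \<inter> J \<subseteq> carrier G" using Hsub by blast
  have "a \<in> core G (H \<inter> J) \<longleftrightarrow> (\<forall>x\<in>carrier G. a \<in> carrier G \<and> x \<otimes> a \<otimes> inv x \<in> H \<inter> J)"
    unfolding core_def using conj_gen[OF HJc] by simp
  then show ?thesis using one_closed by blast
qed

lemma kernel_core:
  "kernel G ((BijGroup SS)\<lparr>carrier := rm ` carrier G\<rparr>) rho = core G (H \<inter> J)"
proof (rule Set.set_eqI)
  fix a
  have sHJ: "subgroup (H \<inter> J) G" using subgroups_Inter_pair[OF sH sJ] .
  show "a \<in> kernel G ((BijGroup SS)\<lparr>carrier := rm ` carrier G\<rparr>) rho \<longleftrightarrow> a \<in> core G (H \<inter> J)"
  proof (cases "a \<in> carrier G")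
    case False then show ?thesis unfolding kernel_def core_mem by simp
  next
    case a: True
    have "rho a = (\<lambda>x\<in>SS. x) \<longleftrightarrow> (\<forall>A\<in>SS. A #> inv a = A)"
    proof
      assume e: "rho a = (\<lambda>x\<in>SS. x)"
      show "\<forall>A\<in>SS. A #> inv a = A"
      proof
        fix A assume A: "A \<in> SS"
        have "rho a A = A" using e A by simp
        then show "A #> inv a = A" using rm_app[OF A] unfolding rho_def by simp
      qed
    next
      assume e: "\<forall>A\<in>SS. A #> inv a = A"
      show "rho a = (\<lambda>x\<in>SS. x)" unfolding rho_def rmult_perm_def
        by (rule restrict_ext) (use e in simp)
    qed
    also have "\<dots> \<longleftrightarrow> (\<forall>x\<in>carrier G. x \<otimes> inv a \<otimes> inv x \<in> H \<inter> J)" using fixall[OF inv_closed[OF a]] .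
    also have "\<dots> \<longleftrightarrow> (\<forall>x\<in>carrier G. x \<otimes> a \<otimes> inv x \<in> H \<inter> J)"
    proof -
      have "\<And>x. x \<in> carrier G \<Longrightarrow> inv (x \<otimes> a \<otimes> inv x) = x \<otimes> inv a \<otimes> inv x"
        using a by (simp add: inv_mult_group m_assoc)
      moreover have "\<And>z. z \<in> carrier G \<Longrightarrow> inv z \<in> H \<inter> J \<longleftrightarrow> z \<in> H \<inter> J"
        using subgroup.m_inv_closed[OF sHJ] by (metis inv_inv)
      ultimately show ?thesis using a by (metis inv_closed m_closed)
    qed
    finally show ?thesis unfolding kernel_def core_mem using a by (simp add: BijGroup_def)
  qed
qed

lemma iso_part: "(BijGroup SS)\<lparr>carrier := rm ` carrier G\<rparr> \<cong> G Mod core G (H \<inter> J)"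
proof -
  let ?H = "(BijGroup SS)\<lparr>carrier := rm ` carrier G\<rparr>"
  have gH: "group ?H" using subgroup.subgroup_is_group[OF rm_subgroup group_BijGroup] .
  have hom: "rho \<in> hom G ?H"
    using rho_hom rho_img unfolding hom_def by auto
  have gh: "group_hom G ?H rho"
    unfolding group_hom_def group_hom_axioms_def using is_group gH hom by simp
  have "G Mod kernel G ?H rho \<cong> ?H"
    using group_hom.FactGroup_iso[OF gh] rho_img by simp
  then have i: "G Mod core G (H \<inter> J) \<cong> ?H" using kernel_core by simp
  have "group (G Mod core G (H \<inter> J))"
    using normal.factorgroup_is_group[OF group_hom.normal_kernel[OF gh]] kernel_core by simp
  then show ?thesis using group.iso_sym i by blast
qed

lemma stabH: "{x \<in> carrier G. H #> x = H} = H"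
  using coset_join1[OF _ _ sH] coset_join2[OF _ sH] Hc by blast
lemma stabJ: "{x \<in> carrier G. J #> x = J} = J"
  using coset_join1[OF _ _ sJ] coset_join2[OF _ sJ] Jc by blast

lemma KJ: "K \<inter> J = H \<inter> J" using HJ_K K_mem by blast

lemma stab_arc: "{x \<in> carrier G. H #> x = H \<and> J #> x = J \<and> (H #> g) #> x = H #> g} = K \<inter> J"
proof (rule Set.set_eqI)
  fix x
  show "x \<in> {x \<in> carrier G. H #> x = H \<and> J #> x = J \<and> (H #> g) #> x = H #> g} \<longleftrightarrow> x \<in> K \<inter> J"
  proof (cases "x \<in> carrier G")
    case False then show ?thesis using Kc by blast
  next
    case x: True
    have 1: "H #> x = H \<longleftrightarrow> x \<in> H" using stabH x by blast
    have 2: "J #> x = J \<longleftrightarrow> x \<in> J" using stabJ x by blast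
    have 3: "(H #> g) #> x = H #> g \<longleftrightarrow> g \<otimes> x \<otimes> inv g \<in> H"
      using rcos_ma[OF Hsub gc x] rcos_eq_iff[OF sH m_closed[OF gc x] gc] by simp
    show ?thesis unfolding mem_Collect_eq 1 2 3 using x K_mem by blast
  qed
qed

end


context cg
begin

lemma iso_SE: "graph_iso (Cos_V G H) (Cos_E G L) (Cos_I G H L) (Cos_V G H) SE {(w, e). e \<in> SE \<and> w \<in> e}"
  unfolding graph_iso_def
proof (intro exI conjI)
  let ?psi = "ends (Cos_I G H L)"
  show "bij_betw id (Cos_V G H) (Cos_V G H)" by simp
  have inj: "inj_on ?psi (Cos_E G L)"
    using L_simple unfolding simple_graph_def inj_on_def by blast
  have img: "?psi ` Cos_E G L = SE"
  proof
    show "?psi ` Cos_E G L \<subseteq> SE"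
    proof
      fix X assume "X \<in> ?psi ` Cos_E G L"
      then obtain e where e: "e \<in> Cos_E G L" "X = ?psi e" by blast
      then obtain y where y: "y \<in> carrier G" "e = L #> y" unfolding GL.Emem by blast
      have "X = {H #> y, H #> (g \<otimes> y)}" using e(2) y GL.ends_eq by simp
      then show "X \<in> SE" unfolding mem_Collect_eq using y(1) by blast
    qed
    show "SE \<subseteq> ?psi ` Cos_E G L"
    proof
      fix X assume "X \<in> SE"
      then obtain y where y: "y \<in> carrier G" "X = {H #> y, H #> (g \<otimes> y)}" by blast
      have "X = ?psi (L #> y)" using y GL.ends_eq by simp
      moreover have "L #> y \<in> Cos_E G L" unfolding GL.Emem using y(1) by blast
      ultimately show "X \<in> ?psi ` Cos_E G L" by blast
    qed
  qed
  show "bij_betw ?psi (Cos_E G L) SE" unfolding bij_betw_def using inj img by simp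
  show "\<forall>v\<in>Cos_V G H. \<forall>e\<in>Cos_E G L. ((v, e) \<in> Cos_I G H L) = ((id v, ?psi e) \<in> {(w, e). e \<in> SE \<and> w \<in> e})"
  proof (intro ballI)
    fix v e assume v: "v \<in> Cos_V G H" and e: "e \<in> Cos_E G L"
    have "?psi e \<in> SE" using img e by blast
    then show "((v, e) \<in> Cos_I G H L) = ((id v, ?psi e) \<in> {(w, e). e \<in> SE \<and> w \<in> e})"
      using GL.inc_iff_ends by simp
  qed
qed

lemma iso_SimpCos: "graph_iso (Cos_V G H) (Cos_E G L) (Cos_I G H L) (Cos_V G H) (SimpCos_E G H g) (SimpCos_I G H g)"
proof -
  have "SimpCos_I G H g = {(w, e). e \<in> SE \<and> w \<in> e}" unfolding SimpCos_I_def SimpCos_E_eq ..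
  then show ?thesis using iso_SE SimpCos_E_eq by simp
qed

lemma iso_base: "graph_iso (Cos_V G H) (Cos_E G L) (Cos_I G H L) (Cos_V G H)
   (base_E (Cos_V G H) (Cos_E G J) (Cos_I G H J)) (base_I (Cos_V G H) (Cos_E G J) (Cos_I G H J))"
proof -
  have "base_I (Cos_V G H) (Cos_E G J) (Cos_I G H J) = {(w, e). e \<in> SE \<and> w \<in> e}"
    unfolding base_I_def GJ.baseE_eq ..
  then show ?thesis using iso_SE GJ.baseE_eq by simp
qed

lemma simple_iff: "simple_graph (Cos_V G H) (Cos_E G J) (Cos_I G H J) \<longleftrightarrow> L = J"
proof
  assume "L = J" then show "simple_graph (Cos_V G H) (Cos_E G J) (Cos_I G H J)" using L_simple by simp
next
  assume sg: "simple_graph (Cos_V G H) (Cos_E G J) (Cos_I G H J)"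
  show "L = J"
  proof
    show "J \<subseteq> L" by (rule JL)
    show "L \<subseteq> J"
    proof
      fix l assume l: "l \<in> L"
      have lc: "l \<in> carrier G" using l L_mem by blast
      have "L #> l = L #> \<one>" using rcos_eq_iff[OF sL lc one_closed] l lc by simp
      then have "ends (Cos_I G H L) (L #> l) = ends (Cos_I G H L) (L #> \<one>)" by simp
      then have "ends (Cos_I G H J) (J #> l) = ends (Cos_I G H J) (J #> \<one>)" using ends_JL lc by simp
      moreover have "J #> l \<in> Cos_E G J" "J #> \<one> \<in> Cos_E G J" unfolding GJ.Emem using lc by blast+
      ultimately have "J #> l = J #> \<one>" using sg unfolding simple_graph_def by blast
      then show "l \<in> J" using rcos_eq_iff[OF sJ lc one_closed] lc by simp
    qed
  qed
qed

definition "Lof A = (SOME B. B \<in> Cos_E G L \<and> A \<subseteq> B)"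

lemma Lof_eq: assumes z: "z \<in> carrier G" shows "Lof (J #> z) = L #> z"
  unfolding Lof_def
proof (rule some_equality)
  show "L #> z \<in> Cos_E G L \<and> J #> z \<subseteq> L #> z"
    unfolding GL.Emem r_coset_def using z JL by blast
  fix B assume B: "B \<in> Cos_E G L \<and> J #> z \<subseteq> B"
  then obtain w where w: "w \<in> carrier G" "B = L #> w" unfolding GL.Emem by blast
  have "z \<in> J #> z" using rcos_self[OF z sJ] .
  then have "z \<in> L #> w" using B w by blast
  then show "B = L #> z" using repr_independence[OF _ w(1) sL] w by simp
qed

end

context cgf
begin

lemma SB_eq:
  assumes y: "y \<in> carrier G"
  shows "{A \<in> Cos_E G J. Lof A = L #> y} = (\<lambda>l. J #> (l \<otimes> y)) ` L"
proof (rule Set.set_eqI)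
  fix A
  show "A \<in> {A \<in> Cos_E G J. Lof A = L #> y} \<longleftrightarrow> A \<in> (\<lambda>l. J #> (l \<otimes> y)) ` L"
  proof
    assume "A \<in> {A \<in> Cos_E G J. Lof A = L #> y}"
    then have A: "A \<in> Cos_E G J" "Lof A = L #> y" by simp_all
    then obtain z where z: "z \<in> carrier G" "A = J #> z" unfolding GJ.Emem by blast
    have "L #> z = L #> y" using A(2) Lof_eq[OF z(1)] z(2) by simp
    then have zl: "z \<otimes> inv y \<in> L" using rcos_eq_iff[OF sL z(1) y] by simp
    have "z = (z \<otimes> inv y) \<otimes> y" using z y by (simp add: m_assoc)
    then have "A = J #> ((z \<otimes> inv y) \<otimes> y)" using z(2) by simp
    then show "A \<in> (\<lambda>l. J #> (l \<otimes> y)) ` L"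
      by (rule image_eqI[of A "\<lambda>l. J #> (l \<otimes> y)" "z \<otimes> inv y"]) (rule zl)
  next
    assume "A \<in> (\<lambda>l. J #> (l \<otimes> y)) ` L"
    then obtain l where l: "l \<in> L" "A = J #> (l \<otimes> y)" by blast
    have lc: "l \<in> carrier G" using l L_mem by blast
    have z: "l \<otimes> y \<in> carrier G" using lc y by simp
    have "(l \<otimes> y) \<otimes> inv y = l" using lc y by (simp add: m_assoc)
    then have "L #> (l \<otimes> y) = L #> y" using rcos_eq_iff[OF sL z y] l by simp
    then have "Lof A = L #> y" using Lof_eq[OF z] l(2) by simp
    moreover have "A \<in> Cos_E G J" unfolding GJ.Emem l(2) using z by blast
    ultimately show "A \<in> {A \<in> Cos_E G J. Lof A = L #> y}" by simp
  qed
qed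

lemma SB_card:
  assumes y: "y \<in> carrier G"
  shows "finite ((\<lambda>l. J #> (l \<otimes> y)) ` L)" "card ((\<lambda>l. J #> (l \<otimes> y)) ` L) = idx G K (H \<inter> J)"
proof -
  have rel: "\<forall>a\<in>L. \<forall>b\<in>L. J #> (a \<otimes> y) = J #> (b \<otimes> y) \<longleftrightarrow> J #> a = J #> b"
    using rcos_mult_cancel[OF sJ _ _ y] L_mem by blast
  show "finite ((\<lambda>l. J #> (l \<otimes> y)) ` L)" using img_card_rel(2)[OF rel] idxLJ by simp
  show "card ((\<lambda>l. J #> (l \<otimes> y)) ` L) = idx G K (H \<inter> J)" using img_card_rel(1)[OF rel] idxLJ by simp
qed

lemma extender_iso:
  "graph_iso (Cos_V G H) (Cos_E G J) (Cos_I G H J) (Cos_V G H)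
     (ext_E (Cos_E G L) (idx G K (H \<inter> J))) (ext_I (Cos_I G H L) (idx G K (H \<inter> J)))"
proof -
  let ?lam = "idx G K (H \<inter> J)"
  define SB where "SB B = {A \<in> Cos_E G J. Lof A = B}" for B
  have finSB: "finite (SB B) \<and> card (SB B) = ?lam" if B: "B \<in> Cos_E G L" for B
  proof -
    obtain y where y: "y \<in> carrier G" "B = L #> y" using B unfolding GL.Emem by blast
    show ?thesis unfolding SB_def y(2) SB_eq[OF y(1)] using SB_card[OF y(1)] by simp
  qed
  define fB where "fB B = (SOME h. bij_betw h (SB B) {0..<card (SB B)})" for B
  have bijB: "bij_betw (fB B) (SB B) {..<?lam}" if B: "B \<in> Cos_E G L" for B
  proof -
    have "\<exists>h. bij_betw h (SB B) {0..<card (SB B)}" using ex_bij_betw_finite_nat finSB[OF B] by blast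
    then have "bij_betw (fB B) (SB B) {0..<card (SB B)}" unfolding fB_def by (rule someI_ex)
    then show ?thesis using finSB[OF B] by (simp add: atLeast0LessThan)
  qed
  have LofE: "Lof A \<in> Cos_E G L \<and> A \<in> SB (Lof A)" if A: "A \<in> Cos_E G J" for A
  proof -
    obtain z where z: "z \<in> carrier G" "A = J #> z" using A unfolding GJ.Emem by blast
    have "Lof A = L #> z" using Lof_eq[OF z(1)] z(2) by simp
    then have "Lof A \<in> Cos_E G L" unfolding GL.Emem using z(1) by blast
    then show ?thesis unfolding SB_def using A by simp
  qed
  define psi where "psi A = (Lof A, fB (Lof A) A)" for A
  have bij: "bij_betw psi (Cos_E G J) (ext_E (Cos_E G L) ?lam)"
    unfolding bij_betw_def ext_E_def
  proof
    show "inj_on psi (Cos_E G J)"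
    proof (rule inj_onI)
      fix A A' assume A: "A \<in> Cos_E G J" and A': "A' \<in> Cos_E G J" and e: "psi A = psi A'"
      have e': "(Lof A, fB (Lof A) A) = (Lof A', fB (Lof A') A')" using e unfolding psi_def .
      have l: "Lof A = Lof A'" using arg_cong[OF e', of fst] by (simp only: fst_conv)
      have f0: "fB (Lof A) A = fB (Lof A') A'" using arg_cong[OF e', of snd] by (simp only: snd_conv)
      then have f: "fB (Lof A) A = fB (Lof A) A'" using l by simp
      have "A \<in> SB (Lof A)" "A' \<in> SB (Lof A)" using LofE[OF A] LofE[OF A'] l by simp_all
      then show "A = A'" using bij_betw_imp_inj_on[OF bijB[OF conjunct1[OF LofE[OF A]]]] f
        unfolding inj_on_def by blast
    qed
    show "psi ` Cos_E G J = Cos_E G L \<times> {..<?lam}"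
    proof
      show "psi ` Cos_E G J \<subseteq> Cos_E G L \<times> {..<?lam}"
      proof
        fix p assume "p \<in> psi ` Cos_E G J"
        then obtain A where A: "A \<in> Cos_E G J" "p = psi A" by blast
        have "fB (Lof A) A \<in> {..<?lam}" using bij_betw_apply[OF bijB[OF conjunct1[OF LofE[OF A(1)]]]] LofE[OF A(1)] by blast
        then show "p \<in> Cos_E G L \<times> {..<?lam}" using A LofE[OF A(1)] unfolding psi_def by simp
      qed
      show "Cos_E G L \<times> {..<?lam} \<subseteq> psi ` Cos_E G J"
      proof
        fix p assume "p \<in> Cos_E G L \<times> {..<?lam}"
        then obtain B i where p: "p = (B, i)" "B \<in> Cos_E G L" "i \<in> {..<?lam}" by blast
        have "i \<in> fB B ` SB B" using bijB[OF p(2)] p(3) unfolding bij_betw_def by simp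
        then obtain A where A: "A \<in> SB B" "i = fB B A" by blast
        have "A \<in> Cos_E G J" "Lof A = B" using A(1) unfolding SB_def by simp_all
        then show "p \<in> psi ` Cos_E G J" unfolding psi_def using p(1) A(2) by force
      qed
    qed
  qed
  show ?thesis unfolding graph_iso_def
  proof (intro exI conjI)
    show "bij_betw id (Cos_V G H) (Cos_V G H)" by simp
    show "bij_betw psi (Cos_E G J) (ext_E (Cos_E G L) ?lam)" by (rule bij)
    show "\<forall>v\<in>Cos_V G H. \<forall>e\<in>Cos_E G J. ((v, e) \<in> Cos_I G H J) = ((id v, psi e) \<in> ext_I (Cos_I G H L) ?lam)"
    proof (intro ballI)
      fix v e assume v: "v \<in> Cos_V G H" and e: "e \<in> Cos_E G J"
      obtain z where z: "z \<in> carrier G" "e = J #> z" using e unfolding GJ.Emem by blast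
      have lof: "Lof e = L #> z" using Lof_eq[OF z(1)] z(2) by simp
      have i: "fB (Lof e) e < ?lam" using bij_betw_apply[OF bijB[OF conjunct1[OF LofE[OF e]]]] LofE[OF e] by simp
      have "(v, e) \<in> Cos_I G H J \<longleftrightarrow> (v, L #> z) \<in> Cos_I G H L"
        unfolding z(2) GJ.inc_iff_ends GL.inc_iff_ends ends_JL[OF z(1)] ..
      then show "((v, e) \<in> Cos_I G H J) = ((id v, psi e) \<in> ext_I (Cos_I G H L) ?lam)"
        unfolding psi_def ext_I_def using lof i by simp
    qed
  qed
qed

end


context cgf
begin
lemma cgXJ: "cgX G H J g K L J"
  by (intro cgX.intro cgX_axioms.intro cg_self sJ gJ splitJ) auto
lemma cgXL: "cgX G H J g K L L"
  by (intro cgX.intro cgX_axioms.intro cg_self sL gL splitL) (use JL in auto)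

lemma regular: "regular_graph (Cos_V G H) (Cos_E G J) (Cos_I G H J) (idx G H K) (idx G K (H \<inter> J))"
  unfolding regular_graph_def
proof (intro conjI ballI allI impI)
  fix v assume "v \<in> Cos_V G H"
  then obtain x where x: "x \<in> carrier G" "v = H #> x" unfolding GJ.Vmem by blast
  show "finite (neighbours (Cos_V G H) (Cos_E G J) (Cos_I G H J) v)" using valency(1)[OF x(1)] x(2) by simp
  show "card (neighbours (Cos_V G H) (Cos_E G J) (Cos_I G H J) v) = idx G H K" using valency(2)[OF x(1)] x(2) by simp
next
  fix u v assume "adjacent (Cos_V G H) (Cos_E G J) (Cos_I G H J) u v"
  note sh = shared[OF this]
  show "finite (shared_edges (Cos_E G J) (Cos_I G H J) u v)" using sh by simp
  show "card (shared_edges (Cos_E G J) (Cos_I G H J) u v) = idx G K (H \<inter> J)" using sh by simp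
qed

lemma idxLJ': "idx G L J = idx G K (H \<inter> J)"
  unfolding idx_def[of G L J] rcosets_sub using idxLJ(1) .

end

lemma card2_split:
  assumes "card R = 2" "a \<in> R" "b \<in> R" "a \<noteq> b" "c \<in> R"
  shows "c = a \<or> c = b"
proof -
  have f: "finite R" using assms(1) by (metis card.infinite zero_neq_numeral)
  have "{a, b} \<subseteq> R" using assms by blast
  moreover have "card {a, b} = card R" using assms(1,4) by simp
  ultimately have "{a, b} = R" using card_subset_eq[OF f] by blast
  then show ?thesis using assms(5) by blast
qed

lemma (in group) split_from_idx:
  assumes sH: "subgroup H G" and sJ: "subgroup J G" and idxJ: "idx G J (H \<inter> J) = 2"
    and gJ: "g \<in> J" and gH: "g \<notin> H \<inter> J" and j: "j \<in> J"
  shows "j \<in> H \<or> j \<otimes> inv g \<in> H"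
proof -
  have sHJ: "subgroup (H \<inter> J) G" using subgroups_Inter_pair[OF sH sJ] .
  have gc: "g \<in> carrier G" using gJ subgroup.mem_carrier[OF sJ] by blast
    have jc: "j \<in> carrier G" using j subgroup.mem_carrier[OF sJ] by blast
    let ?R = "(\<lambda>a. (H \<inter> J) #> a) ` J"
    have c2: "card ?R = 2" using idxJ unfolding idx_def rcosets_sub .
    have a: "(H \<inter> J) #> \<one> \<in> ?R" using subgroup.one_closed[OF sJ] by blast
    have b: "(H \<inter> J) #> g \<in> ?R" using gJ by blast
    have c: "(H \<inter> J) #> j \<in> ?R" using j by blast
    have e1: "(H \<inter> J) #> \<one> = H \<inter> J" using coset_mult_one[of "H \<inter> J"] subgroup.subset[OF sH] by blast
    have ab: "(H \<inter> J) #> \<one> \<noteq> (H \<inter> J) #> g"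
    proof
      assume "(H \<inter> J) #> \<one> = (H \<inter> J) #> g"
      then have "g \<in> H \<inter> J" using rcos_self[OF gc sHJ] e1 by simp
      then show False using gH by blast
    qed
    from card2_split[OF c2 a b ab c] show ?thesis
    proof
      assume "(H \<inter> J) #> j = (H \<inter> J) #> \<one>"
      then have "j \<in> H \<inter> J" using rcos_self[OF jc sHJ] e1 by simp
      then show ?thesis by blast
    next
      assume "(H \<inter> J) #> j = (H \<inter> J) #> g"
      then have "j \<otimes> inv g \<in> H \<inter> J" using rcos_eq_iff[OF sHJ jc gc] by simp
      then show ?thesis by blast
    qed
qed

theorem theorem2p2:
  fixes G :: "('a, 'b) monoid_scheme" and H J :: "'a set" and g :: 'a
    and K L :: "'a set" and k lam :: nat
  assumes grp: "group G"
    and sH: "subgroup H G" and sJ: "subgroup J G"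
    and HG: "H \<noteq> carrier G"
    and idxJ: "idx G J (H \<inter> J) = 2"
    and finH: "finite (rcosets\<^bsub>G\<lparr>carrier := H\<rparr>\<^esub> (H \<inter> J))"
    and gJ: "g \<in> J" and gH: "g \<notin> H \<inter> J"
    and K_def: "K = H \<inter> conj_set G H g"
    and k_def: "k = idx G H K"
    and lam_def: "lam = idx G K (H \<inter> J)"
    and L_def: "L = generate G (K \<union> {g})"
  shows
    \<comment> \<open>(a)\<close>
    "(is_graph (Cos_V G H) (Cos_E G J) (Cos_I G H J)
      \<and> locally_finite (Cos_V G H) (Cos_E G J) (Cos_I G H J)
      \<and> regular_graph (Cos_V G H) (Cos_E G J) (Cos_I G H J) k lam
      \<and> (connected_graph (Cos_V G H) (Cos_E G J) (Cos_I G H J)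
           \<longleftrightarrow> carrier G = generate G (H \<union> J)))
   \<and>
    \<comment> \<open>(b)\<close>
    (subgroup (rmult_perm G (Cos_V G H \<union> Cos_E G J) ` carrier G)
              (BijGroup (Cos_V G H \<union> Cos_E G J))
      \<and> arc_transitive_on (Cos_V G H) (Cos_E G J) (Cos_I G H J)
              (rmult_perm G (Cos_V G H \<union> Cos_E G J) ` carrier G)
      \<and> (BijGroup (Cos_V G H \<union> Cos_E G J))
              \<lparr>carrier := rmult_perm G (Cos_V G H \<union> Cos_E G J) ` carrier G\<rparr>
          \<cong> G Mod core G (H \<inter> J)
      \<and> {x \<in> carrier G. H #>\<^bsub>G\<^esub> x = H} = H
      \<and> {x \<in> carrier G. J #>\<^bsub>G\<^esub> x = J} = J
      \<and> {x \<in> carrier G. H #>\<^bsub>G\<^esub> x = H \<and> J #>\<^bsub>G\<^esub> x = J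
             \<and> (H #>\<^bsub>G\<^esub> g) #>\<^bsub>G\<^esub> x = H #>\<^bsub>G\<^esub> g} = K \<inter> J
      \<and> K \<inter> J = H \<inter> J)
   \<and>
    \<comment> \<open>(c)\<close>
    (H \<inter> L = K \<and> idx G L K = 2 \<and> J \<subseteq> L \<and> idx G L J = lam
      \<and> simple_graph (Cos_V G H) (Cos_E G L) (Cos_I G H L)
      \<and> locally_finite (Cos_V G H) (Cos_E G L) (Cos_I G H L)
      \<and> graph_iso (Cos_V G H) (Cos_E G L) (Cos_I G H L)
                  (Cos_V G H) (SimpCos_E G H g) (SimpCos_I G H g))
   \<and>
    \<comment> \<open>(d)\<close>
    (graph_iso (Cos_V G H) (Cos_E G L) (Cos_I G H L)
        (Cos_V G H) (base_E (Cos_V G H) (Cos_E G J) (Cos_I G H J))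
                    (base_I (Cos_V G H) (Cos_E G J) (Cos_I G H J))
      \<and> G_extender G lam (Cos_V G H) (Cos_E G J) (Cos_I G H J)
                          (Cos_V G H) (Cos_E G L) (Cos_I G H L)
      \<and> (simple_graph (Cos_V G H) (Cos_E G J) (Cos_I G H J) \<longleftrightarrow> L = J))"

proof -
  have gH': "g \<notin> H" using gJ gH by blast
  note splitJ = group.split_from_idx[OF grp sH sJ idxJ gJ gH]
  interpret C: cgf G H J g K L
    by (intro cgf.intro cg.intro cg_axioms.intro cgf_axioms.intro grp sH sJ gJ gH' splitJ K_def L_def finH)
  show ?thesis
    unfolding k_def lam_def
    using C.GJ.is_graph C.loc_fin_gen[OF C.cgXJ] C.regular C.connected_iff
      C.rm_subgroup C.GJ.arc_trans C.iso_part C.stabH C.stabJ C.stab_arc C.KJ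
      C.HL C.idxLK C.JL C.idxLJ' C.L_simple C.loc_fin_gen[OF C.cgXL] C.iso_SimpCos
      C.iso_base C.extender_iso C.GL.G_arc_trans C.GJ.G_arc_trans C.simple_iff
    unfolding G_extender_def by simp
qed


end
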